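(* Let $\Omega\subset\mathbb{R}^d$ be a bounded open set, let $\{\delta_k\}$ be a decreasing sequence with $\delta_k\to0$ and $\delta_k\le\delta_0$, and let $D=\Omega\cup\{\mathbf{y}\in\mathbb{R}^d\setminus\Omega:\operatorname{dist}(\mathbf{y},\partial\Omega)<\delta_0\}$. Let the kernels $\gamma_{\delta_k}$ and the numbers $\underline{r}(n_{\delta_k})$ be as in the context, and assume $$\lim_{k\to\infty}\int_{\|\mathbf{z}\|_2\le\underline{r}(n_{\delta_k})}z_i^2\,\widetilde{\gamma}_{\delta_k}(\|\mathbf{z}\|_2)\,d\mathbf{z}=1,\qquad i=1,\dots,d.$$ Let $u\in H^1(D)$ be the extension by zero of a function in $H^1_0(\Omega)$. Then $$\lim_{k\to\infty}\int_D\int_D|u(\mathbf{y})-u(\mathbf{x})|^2\,\gamma_{\delta_k}(\mathbf{x},\mathbf{y})\,\chi_{\underline{r}(n_{\delta_k})}(\|\mathbf{y}-\mathbf{x}\|_2)\,d\mathbf{y}\,d\mathbf{x}=\int_D|\nabla u(\mathbf{x})|^2\,d\mathbf{x}.$$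
   Context: $B_\delta(\mathbf{x})=\{\mathbf{y}\in\mathbb{R}^d:\|\mathbf{y}-\mathbf{x}\|_2\le\delta\}$. Each kernel is $\gamma_\delta(\mathbf{x},\mathbf{y})=\widetilde{\gamma}_\delta(\|\mathbf{y}-\mathbf{x}\|_2)$ with $\widetilde{\gamma}_\delta\ge0$, $\widetilde{\gamma}_\delta(t)>0$ for $0\le t<\delta$, $\widetilde{\gamma}_\delta(t)=0$ for $t>\delta$, and $\int_{B_\delta(\mathbf{0})}z_i^2\widetilde{\gamma}_\delta(\|\mathbf{z}\|_2)d\mathbf{z}=1$ for $i=1,\dots,d$. For each $\delta$ and each point $\mathbf{x}$ a polytope $B_{\delta,n_{\delta,\mathbf{x}}}(\mathbf{x})\subset B_\delta(\mathbf{x})$ is given; $r_{\delta,\mathbf{x}}$ is the radius of the largest ball centered at $\mathbf{x}$ contained in it and $\underline{r}(n_\delta)=\inf_{\mathbf{x}\in\Omega}r_{\delta,\mathbf{x}}$. $\chi_r$ denotes the indicator function of $[0,r]$. *)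

theory Defs
  imports "HOL-Analysis.Analysis"
begin

definition partial_dir :: "'a::euclidean_space \<Rightarrow> ('a \<Rightarrow> real) \<Rightarrow> 'a \<Rightarrow> real" where
  "partial_dir i f = (\<lambda>x. frechet_derivative f (at x) i)"

definition C_inf :: "('a::euclidean_space \<Rightarrow> real) \<Rightarrow> bool" where
  "C_inf f \<longleftrightarrow> (\<forall>is. set is \<subseteq> Basis \<longrightarrow> (\<forall>x. foldr partial_dir is f differentiable (at x)))"

definition test_fun :: "'a::euclidean_space set \<Rightarrow> ('a \<Rightarrow> real) \<Rightarrow> bool" where
  "test_fun \<Omega> \<phi> \<longleftrightarrow> C_inf \<phi> \<and> compact (closure {x. \<phi> x \<noteq> 0}) \<and> closure {x. \<phi> x \<noteq> 0} \<subseteq> \<Omega>"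

definition grad :: "('a::euclidean_space \<Rightarrow> real) \<Rightarrow> 'a \<Rightarrow> 'a" where
  "grad f x = (\<Sum>i\<in>Basis. frechet_derivative f (at x) i *\<^sub>R i)"

(* u belongs to H^1_0(Omega) (closure of C_c^infinity(Omega) in the H^1 norm), with
   (weak) gradient g; u, g are functions on all of R^d *)
definition H10 :: "'a::euclidean_space set \<Rightarrow> ('a \<Rightarrow> real) \<Rightarrow> ('a \<Rightarrow> 'a) \<Rightarrow> bool" where
  "H10 \<Omega> u g \<longleftrightarrow> u \<in> borel_measurable lborel \<and> g \<in> borel_measurable lborel \<and>
     (\<exists>\<phi>. (\<forall>n. test_fun \<Omega> (\<phi> n)) \<and>
        ((\<lambda>n. \<integral>\<^sup>+ x. ennreal ((\<phi> n x - u x)\<^sup>2) \<partial>lborel) \<longlonglongrightarrow> 0) \<and>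
        ((\<lambda>n. \<integral>\<^sup>+ x. ennreal ((norm (grad (\<phi> n) x - g x))\<^sup>2) \<partial>lborel) \<longlonglongrightarrow> 0))"

definition inner_radius :: "'a::euclidean_space \<Rightarrow> 'a set \<Rightarrow> real" where
  "inner_radius x P = Sup {r. ball x r \<subseteq> P}"

end

theory Submission
  imports Defs
begin

definition nice :: "('a::euclidean_space \<Rightarrow> real) \<Rightarrow> ('a \<Rightarrow> 'a) \<Rightarrow> bool" where
  "nice w a \<longleftrightarrow> (\<forall>x. (w has_derivative (\<lambda>h. a x \<bullet> h)) (at x)) \<and> continuous_on UNIV a \<and>
     (\<exists>R. \<forall>x. R < norm x \<longrightarrow> w x = 0 \<and> a x = 0)"

definition Tf :: "('a::euclidean_space \<Rightarrow> real) \<Rightarrow> 'a \<Rightarrow> ennreal" where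
  "Tf w z = (\<integral>\<^sup>+x. ennreal ((w (x + z) - w x)\<^sup>2) \<partial>lborel)"

definition Qf :: "('a::euclidean_space \<Rightarrow> 'a) \<Rightarrow> 'a \<Rightarrow> ennreal" where
  "Qf a z = (\<integral>\<^sup>+x. ennreal ((a x \<bullet> z)\<^sup>2) \<partial>lborel)"

lemma nice_cont_w: "nice w a \<Longrightarrow> continuous_on UNIV w"
  unfolding nice_def
  by (meson continuous_at_imp_continuous_on has_derivative_continuous)

lemma nice_meas:
  assumes "nice w a" shows "w \<in> borel_measurable borel" "a \<in> borel_measurable borel"
  using nice_cont_w[OF assms] assms unfolding nice_def
  by (auto intro: borel_measurable_continuous_onI)

lemma nice_bound:
  assumes "nice w a"
  obtains R M where "R \<ge> 0" "M \<ge> 0" "\<And>x. R < norm x \<Longrightarrow> w x = 0 \<and> a x = 0" "\<And>x. norm (a x) \<le> M"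
proof -
  obtain R where R: "\<And>x. R < norm x \<Longrightarrow> w x = 0 \<and> a x = 0" using assms unfolding nice_def by blast
  have c: "continuous_on (cball 0 (max R 0)) a" using assms unfolding nice_def
    using continuous_on_subset by blast
  have "compact (a ` cball 0 (max R 0))" by (rule compact_continuous_image[OF c compact_cball])
  then obtain M where M: "\<And>y. y \<in> a ` cball 0 (max R 0) \<Longrightarrow> norm y \<le> M"
    using compact_imp_bounded bounded_iff by metis
  have "norm (a x) \<le> max M 0" for x
  proof (cases "norm x \<le> max R 0")
    case True then show ?thesis using M[of "a x"] by auto
  next
    case False then show ?thesis using R[of x] by auto
  qed
  then show ?thesis using that[of "max R 0" "max M 0"] R by auto
qed

lemma nice_remainder:
  assumes "nice w a" "R \<ge> 0" "\<And>x. R < norm x \<Longrightarrow> w x = 0 \<and> a x = 0" "0 < \<epsilon>"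
  shows "\<exists>\<eta>>0. \<eta> \<le> 1 \<and> (\<forall>x z. norm z < \<eta> \<longrightarrow>
     \<bar>w (x + z) - w x - a x \<bullet> z\<bar> \<le> \<epsilon> * norm z \<and>
     (R + 1 < norm x \<longrightarrow> w (x + z) - w x - a x \<bullet> z = 0))"
proof -
  have der: "\<And>x. (w has_derivative (\<lambda>h. a x \<bullet> h)) (at x)" and ca: "continuous_on UNIV a"
    using assms(1) unfolding nice_def by auto
  have "uniformly_continuous_on (cball 0 (R+2)) a"
    by (rule compact_uniformly_continuous[OF continuous_on_subset[OF ca] compact_cball]) auto
  then obtain d where d: "d > 0" "\<And>x x'. x \<in> cball 0 (R+2) \<Longrightarrow> x' \<in> cball 0 (R+2) \<Longrightarrow>
      dist x' x < d \<Longrightarrow> dist (a x') (a x) < \<epsilon>"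
    unfolding uniformly_continuous_on_def using assms(4) by metis
  define \<eta> where "\<eta> = min d 1"
  have "norm z < \<eta> \<Longrightarrow> \<bar>w (x + z) - w x - a x \<bullet> z\<bar> \<le> \<epsilon> * norm z \<and>
     (R + 1 < norm x \<longrightarrow> w (x + z) - w x - a x \<bullet> z = 0)" for x z
  proof -
    assume z: "norm z < \<eta>"
    have hd: "DERIV (\<lambda>t. w (x + t *\<^sub>R z)) t :> a (x + t *\<^sub>R z) \<bullet> z" for t
    proof -
      have l: "((\<lambda>t. x + t *\<^sub>R z) has_derivative (\<lambda>s. s *\<^sub>R z)) (at t)"
        by (auto intro!: derivative_eq_intros)
      have "((\<lambda>t. w (x + t *\<^sub>R z)) has_derivative (\<lambda>s. a (x + t *\<^sub>R z) \<bullet> (s *\<^sub>R z))) (at t)"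
        using has_derivative_compose[OF l der] by simp
      moreover have "(\<lambda>s. a (x + t *\<^sub>R z) \<bullet> (s *\<^sub>R z)) = (*) (a (x + t *\<^sub>R z) \<bullet> z)"
        by (auto simp: fun_eq_iff)
      ultimately show ?thesis unfolding has_field_derivative_def by simp
    qed
    obtain s where s: "0 < s" "s < 1"
      "w (x + 1 *\<^sub>R z) - w (x + 0 *\<^sub>R z) = (1 - 0) * (a (x + s *\<^sub>R z) \<bullet> z)"
      using MVT2[of 0 1 "\<lambda>t. w (x + t *\<^sub>R z)", OF _ hd] by auto
    have eq: "w (x + z) - w x - a x \<bullet> z = (a (x + s *\<^sub>R z) - a x) \<bullet> z"
      using s(3) by (simp add: inner_diff_left)
    have nsz: "norm (s *\<^sub>R z) \<le> norm z" using s by (simp add: mult_left_le_one_le)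
    show ?thesis
    proof (cases "norm x \<le> R + 1")
      case True
      have "norm (x + s *\<^sub>R z) \<le> norm x + norm (s *\<^sub>R z)" by (rule norm_triangle_ineq)
      then have "x + s *\<^sub>R z \<in> cball 0 (R+2)" using True nsz z unfolding \<eta>_def by auto
      moreover have "x \<in> cball 0 (R+2)" using True by auto
      moreover have "dist (x + s *\<^sub>R z) x < d" using nsz z unfolding \<eta>_def by (simp add: dist_norm)
      ultimately have "dist (a (x + s *\<^sub>R z)) (a x) < \<epsilon>" using d by blast
      then have n: "norm (a (x + s *\<^sub>R z) - a x) \<le> \<epsilon>" by (simp add: dist_norm)
      have "\<bar>(a (x + s *\<^sub>R z) - a x) \<bullet> z\<bar> \<le> norm (a (x + s *\<^sub>R z) - a x) * norm z"
        by (rule Cauchy_Schwarz_ineq2)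
      also have "\<dots> \<le> \<epsilon> * norm z" using n by (simp add: mult_right_mono)
      finally show ?thesis using True eq by auto
    next
      case False
      have "norm x - norm z \<le> norm (x + z)" using norm_triangle_ineq[of "x+z" "-z"] by simp
      then have "R < norm (x + z)" using False z unfolding \<eta>_def by auto
      then have "w (x + z) = 0" "w x = 0" "a x = 0" using assms(3)[of "x+z"] assms(3)[of x] False by auto
      then show ?thesis using assms(4) by simp
    qed
  qed
  then show ?thesis using d unfolding \<eta>_def by (intro exI[of _ "min d 1"]) auto
qed
lemma sq_pert:
  fixes A r M n \<epsilon> :: real
  assumes "\<bar>A\<bar> \<le> M * n" "\<bar>r\<bar> \<le> \<epsilon> * n" "0 \<le> \<epsilon>" "\<epsilon> \<le> 1" "0 \<le> M" "0 \<le> n"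
  shows "(A + r)\<^sup>2 \<le> A\<^sup>2 + (2*M+1)*\<epsilon>*n\<^sup>2 \<and> A\<^sup>2 \<le> (A + r)\<^sup>2 + (2*M+1)*\<epsilon>*n\<^sup>2"
proof -
  have e: "(A + r)\<^sup>2 - A\<^sup>2 = r * (2*A + r)" by (simp add: power2_eq_square algebra_simps)
  have "\<bar>2*A + r\<bar> \<le> 2*M*n + \<epsilon>*n" using assms by linarith
  also have "\<dots> \<le> (2*M+1)*n" using assms by (simp add: algebra_simps mult_left_le_one_le)
  finally have b: "\<bar>2*A + r\<bar> \<le> (2*M+1)*n" .
  have "\<bar>r * (2*A + r)\<bar> \<le> (\<epsilon>*n) * ((2*M+1)*n)"
    unfolding abs_mult by (rule mult_mono[OF assms(2) b]) (use assms in auto)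
  then show ?thesis using e by (simp add: power2_eq_square algebra_simps abs_le_iff)
qed

lemma nice_taylor:
  assumes "nice w a"
  obtains C where "C \<ge> 0" "\<And>\<epsilon>. 0 < \<epsilon> \<Longrightarrow> \<epsilon> \<le> 1 \<Longrightarrow> \<exists>\<eta>>0. \<forall>z. norm z < \<eta> \<longrightarrow>
     Tf w z \<le> Qf a z + ennreal (C * \<epsilon> * (norm z)\<^sup>2) \<and> Qf a z \<le> Tf w z + ennreal (C * \<epsilon> * (norm z)\<^sup>2)"
proof -
  obtain R M where RM: "R \<ge> 0" "M \<ge> 0" "\<And>x. R < norm x \<Longrightarrow> w x = 0 \<and> a x = 0" "\<And>x. norm (a x) \<le> M"
    using nice_bound[OF assms] by blast
  have [measurable]: "w \<in> borel_measurable borel" "a \<in> borel_measurable borel"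
    using nice_meas[OF assms] by auto
  define V where "V = measure lborel (cball (0::'a) (R+1))"
  have V: "emeasure lborel (cball (0::'a) (R+1)) = ennreal V" "V \<ge> 0"
    unfolding V_def
     apply (rule emeasure_eq_ennreal_measure)
    using emeasure_lborel_cball_finite[of "0::'a" "R+1"] apply (simp add: less_top)
    by (rule measure_nonneg)
  define C where "C = (2*M+1)*V"
  have "C \<ge> 0" unfolding C_def using RM V by auto
  moreover
  have "\<exists>\<eta>>0. \<forall>z. norm z < \<eta> \<longrightarrow>
     Tf w z \<le> Qf a z + ennreal (C * \<epsilon> * (norm z)\<^sup>2) \<and> Qf a z \<le> Tf w z + ennreal (C * \<epsilon> * (norm z)\<^sup>2)"
    if e: "0 < \<epsilon>" "\<epsilon> \<le> 1" for \<epsilon>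
  proof -
    obtain \<eta> where \<eta>: "\<eta> > 0" "\<eta> \<le> 1" "\<And>x z. norm z < \<eta> \<Longrightarrow>
     \<bar>w (x + z) - w x - a x \<bullet> z\<bar> \<le> \<epsilon> * norm z \<and>
     (R + 1 < norm x \<longrightarrow> w (x + z) - w x - a x \<bullet> z = 0)"
      using nice_remainder[OF assms RM(1) RM(3) e(1)] by blast
    have "Tf w z \<le> Qf a z + ennreal (C * \<epsilon> * (norm z)\<^sup>2) \<and> Qf a z \<le> Tf w z + ennreal (C * \<epsilon> * (norm z)\<^sup>2)"
      if z: "norm z < \<eta>" for z
    proof -
      define c where "c = (2*M+1)*\<epsilon>*(norm z)\<^sup>2"
      have c0: "c \<ge> 0" unfolding c_def using RM e by auto
      have pw: "(w (x + z) - w x)\<^sup>2 \<le> (a x \<bullet> z)\<^sup>2 + c * indicator (cball 0 (R+1)) x \<and>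
                (a x \<bullet> z)\<^sup>2 \<le> (w (x + z) - w x)\<^sup>2 + c * indicator (cball 0 (R+1)) x" for x
      proof (cases "norm x \<le> R + 1")
        case True
        have A: "\<bar>a x \<bullet> z\<bar> \<le> M * norm z"
          using Cauchy_Schwarz_ineq2[of "a x" z] RM(4)[of x] by (meson mult_right_mono norm_ge_zero order_trans)
        have eq: "w (x + z) - w x = a x \<bullet> z + (w (x + z) - w x - a x \<bullet> z)" by simp
        have "(a x \<bullet> z + (w (x + z) - w x - a x \<bullet> z))\<^sup>2 \<le> (a x \<bullet> z)\<^sup>2 + (2*M+1)*\<epsilon>*(norm z)\<^sup>2 \<and>
             (a x \<bullet> z)\<^sup>2 \<le> (a x \<bullet> z + (w (x + z) - w x - a x \<bullet> z))\<^sup>2 + (2*M+1)*\<epsilon>*(norm z)\<^sup>2"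
          by (rule sq_pert[OF A conjunct1[OF \<eta>(3)[OF z, of x]]]) (use e RM in auto)
        then show ?thesis unfolding eq[symmetric] c_def using True by (simp add: indicator_def)
      next
        case False
        then have "w (x + z) - w x = a x \<bullet> z" using \<eta>(3)[OF z, of x] by auto
        then show ?thesis using c0 by (simp add: indicator_def)
      qed
      have int: "(\<integral>\<^sup>+x. ennreal (f x + c * indicator (cball 0 (R+1)) x) \<partial>lborel) = (\<integral>\<^sup>+x. ennreal (f x) \<partial>lborel) + ennreal (C * \<epsilon> * (norm z)\<^sup>2)"
        if [measurable]: "f \<in> borel_measurable borel" and f0: "\<And>x. f x \<ge> 0" for f :: "'a \<Rightarrow> real"
      proof -
        have "(\<integral>\<^sup>+x. ennreal (f x + c * indicator (cball 0 (R+1)) x) \<partial>lborel) =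
              (\<integral>\<^sup>+x. ennreal (f x) + ennreal c * indicator (cball 0 (R+1)) x \<partial>lborel)"
          using f0 c0 by (intro nn_integral_cong) (auto simp: indicator_def ennreal_plus)
        also have "\<dots> = (\<integral>\<^sup>+x. ennreal (f x) \<partial>lborel) + (\<integral>\<^sup>+x. ennreal c * indicator (cball (0::'a) (R+1)) x \<partial>lborel)"
          by (rule nn_integral_add) (auto intro!: borel_measurable_times_ennreal borel_measurable_indicator)
        also have "(\<integral>\<^sup>+x. ennreal c * indicator (cball (0::'a) (R+1)) x \<partial>lborel) = ennreal c * emeasure lborel (cball (0::'a) (R+1))"
          by (rule nn_integral_cmult_indicator) simp
        also have "ennreal c * emeasure lborel (cball (0::'a) (R+1)) = ennreal (C * \<epsilon> * (norm z)\<^sup>2)"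
          using V c0 unfolding c_def C_def by (simp add: ennreal_mult'[symmetric] mult_ac)
        finally show ?thesis .
      qed
      have "Tf w z \<le> (\<integral>\<^sup>+x. ennreal ((a x \<bullet> z)\<^sup>2 + c * indicator (cball 0 (R+1)) x) \<partial>lborel)"
        unfolding Tf_def by (intro nn_integral_mono ennreal_leI) (use pw in blast)
      also have "\<dots> = Qf a z + ennreal (C * \<epsilon> * (norm z)\<^sup>2)" unfolding Qf_def by (rule int) auto
      finally have 1: "Tf w z \<le> Qf a z + ennreal (C * \<epsilon> * (norm z)\<^sup>2)" .
      have "Qf a z \<le> (\<integral>\<^sup>+x. ennreal ((w (x + z) - w x)\<^sup>2 + c * indicator (cball 0 (R+1)) x) \<partial>lborel)"
        unfolding Qf_def by (intro nn_integral_mono ennreal_leI) (use pw in blast)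
      also have "\<dots> = Tf w z + ennreal (C * \<epsilon> * (norm z)\<^sup>2)" unfolding Tf_def by (rule int) auto
      finally show ?thesis using 1 by simp
    qed
    then show ?thesis using \<eta> by blast
  qed
  ultimately show ?thesis using that by blast
qed

lemma nn_integral_translate:
  fixes c :: "'a::euclidean_space"
  assumes [measurable]: "f \<in> borel_measurable borel"
  shows "(\<integral>\<^sup>+x. f (x + c) \<partial>lborel) = (\<integral>\<^sup>+x. f x \<partial>lborel)"
proof -
  have "(\<integral>\<^sup>+x. f x \<partial>lborel) = (\<integral>\<^sup>+x. f x \<partial>distr lborel borel ((+) c))"
    by (simp add: lborel_distr_plus)
  also have "\<dots> = (\<integral>\<^sup>+x. f (c + x) \<partial>lborel)"
    by (subst nn_integral_distr) auto
  finally show ?thesis by (simp add: add.commute)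
qed

lemma Tf_half:
  fixes w :: "'a::euclidean_space \<Rightarrow> real"
  assumes [measurable]: "w \<in> borel_measurable borel"
  shows "Tf w z \<le> 4 * Tf w ((1/2) *\<^sub>R z)"
proof -
  define h where "h = (1/2) *\<^sub>R z"
  have zh: "z = h + h" unfolding h_def by (simp add: scaleR_2[symmetric])
  have pw: "(w (x + z) - w x)\<^sup>2 \<le> 2 * (w ((x + h) + h) - w (x + h))\<^sup>2 + 2 * (w (x + h) - w x)\<^sup>2" for x
  proof -
    have "(w (x + z) - w x) = (w ((x + h) + h) - w (x + h)) + (w (x + h) - w x)"
      unfolding zh by (simp add: add.assoc)
    moreover have "(p + q)\<^sup>2 \<le> 2 * p\<^sup>2 + 2 * q\<^sup>2" for p q :: real
      using sum_squares_bound[of p q] by (simp add: power2_eq_square algebra_simps)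
    ultimately show ?thesis by metis
  qed
  have "Tf w z \<le> (\<integral>\<^sup>+x. ennreal 2 * ennreal ((w ((x + h) + h) - w (x + h))\<^sup>2) + ennreal 2 * ennreal ((w (x + h) - w x)\<^sup>2) \<partial>lborel)"
    unfolding Tf_def
  proof (intro nn_integral_mono)
    fix x
    have "ennreal ((w (x + z) - w x)\<^sup>2) \<le> ennreal (2 * (w ((x + h) + h) - w (x + h))\<^sup>2 + 2 * (w (x + h) - w x)\<^sup>2)"
      by (rule ennreal_leI[OF pw])
    also have "\<dots> = ennreal 2 * ennreal ((w ((x + h) + h) - w (x + h))\<^sup>2) + ennreal 2 * ennreal ((w (x + h) - w x)\<^sup>2)"
      by (simp add: ennreal_plus ennreal_mult)
    finally show "ennreal ((w (x + z) - w x)\<^sup>2) \<le> \<dots>" .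
  qed
  also have "\<dots> = 2 * (\<integral>\<^sup>+x. ennreal ((w ((x + h) + h) - w (x + h))\<^sup>2) \<partial>lborel) + 2 * (\<integral>\<^sup>+x. ennreal ((w (x + h) - w x)\<^sup>2) \<partial>lborel)"
    by (subst nn_integral_add) (auto simp: nn_integral_cmult)
  also have "(\<integral>\<^sup>+x. ennreal ((w ((x + h) + h) - w (x + h))\<^sup>2) \<partial>lborel) = Tf w h"
    unfolding Tf_def by (rule nn_integral_translate[where f="\<lambda>x. ennreal ((w (x + h) - w x)\<^sup>2)"]) measurable
  finally show ?thesis unfolding Tf_def h_def by (simp add: mult_2[symmetric] mult.assoc)
qed

lemma Tf_pow:
  fixes w :: "'a::euclidean_space \<Rightarrow> real"
  assumes [measurable]: "w \<in> borel_measurable borel"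
  shows "Tf w z \<le> ennreal (4^n) * Tf w (((1/2)^n) *\<^sub>R z)"
proof (induction n)
  case 0 then show ?case by simp
next
  case (Suc n)
  have "Tf w z \<le> ennreal (4^n) * Tf w (((1/2)^n) *\<^sub>R z)" by (rule Suc)
  also have "\<dots> \<le> ennreal (4^n) * (4 * Tf w ((1/2) *\<^sub>R (((1/2)^n) *\<^sub>R z)))"
    by (intro mult_left_mono Tf_half) auto
  also have "\<dots> = ennreal (4^Suc n) * Tf w (((1/2)^Suc n) *\<^sub>R z)"
    by (simp add: ennreal_mult mult_ac)
  finally show ?case .
qed

lemma Qf_scale:
  assumes [measurable]: "a \<in> borel_measurable borel"
  shows "Qf a (c *\<^sub>R z) = ennreal (c\<^sup>2) * Qf a z"
  unfolding Qf_def
  by (subst nn_integral_cmult[symmetric]) (auto simp: ennreal_mult[symmetric] power_mult_distrib)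

lemma nice_T_le_Q:
  assumes "nice w a"
  shows "Tf w z \<le> Qf a z"
proof -
  have [measurable]: "w \<in> borel_measurable borel" "a \<in> borel_measurable borel" using nice_meas[OF assms] by auto
  obtain C where C: "C \<ge> 0" "\<And>\<epsilon>. 0 < \<epsilon> \<Longrightarrow> \<epsilon> \<le> 1 \<Longrightarrow> \<exists>\<eta>>0. \<forall>z. norm z < \<eta> \<longrightarrow>
     Tf w z \<le> Qf a z + ennreal (C * \<epsilon> * (norm z)\<^sup>2) \<and> Qf a z \<le> Tf w z + ennreal (C * \<epsilon> * (norm z)\<^sup>2)"
    using nice_taylor[OF assms] by blast
  show ?thesis
  proof (rule ennreal_le_epsilon)
    fix e :: real assume e: "0 < e"
    define K where "K = (C + 1) * ((norm z)\<^sup>2 + 1)"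
    have K: "K > 0" unfolding K_def using C by (intro mult_pos_pos) (auto intro: add_nonneg_pos)
    define \<epsilon> where "\<epsilon> = min 1 (e / K)"
    have \<epsilon>: "0 < \<epsilon>" "\<epsilon> \<le> 1" "\<epsilon> \<le> e / K" unfolding \<epsilon>_def using e K by auto
    obtain \<eta> where \<eta>: "\<eta> > 0" "\<And>z. norm z < \<eta> \<Longrightarrow> Tf w z \<le> Qf a z + ennreal (C * \<epsilon> * (norm z)\<^sup>2)"
      using C(2)[OF \<epsilon>(1,2)] by blast
    obtain n where n: "(1/2::real)^n < \<eta> / (norm z + 1)"
    proof -
      have "0 < \<eta> / (norm z + 1)" using \<eta>(1) by (simp add: add_nonneg_pos)
      then show ?thesis using real_arch_pow_inv[of "\<eta> / (norm z + 1)" "1/2"] that by auto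
    qed
    have "(1/2::real)^n * norm z \<le> (1/2)^n * (norm z + 1)" by simp
    also have "\<dots> < \<eta>"
    proof -
      have "0 < norm z + 1" by (simp add: add_nonneg_pos)
      then show ?thesis using n by (simp add: less_divide_eq)
    qed
    finally have nz: "norm (((1/2::real)^n) *\<^sub>R z) < \<eta>" by simp
    have "Tf w z \<le> ennreal (4^n) * Tf w (((1/2)^n) *\<^sub>R z)" by (rule Tf_pow) measurable
    also have "\<dots> \<le> ennreal (4^n) * (Qf a (((1/2)^n) *\<^sub>R z) + ennreal (C * \<epsilon> * (norm (((1/2::real)^n) *\<^sub>R z))\<^sup>2))"
      by (intro mult_left_mono \<eta>(2) nz) auto
    also have "\<dots> = Qf a z + ennreal (C * \<epsilon> * (norm z)\<^sup>2)"
    proof -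
      have 4: "(4::real)^n * ((1/2)^n)\<^sup>2 = 1"
        by (simp add: power2_eq_square power_mult_distrib[symmetric] flip: power_mult_distrib)
      have "ennreal (4^n) * Qf a (((1/2)^n) *\<^sub>R z) = ennreal ((4::real)^n * ((1/2)^n)\<^sup>2) * Qf a z"
        by (simp add: Qf_scale ennreal_mult mult.assoc)
      moreover have "ennreal (4^n) * ennreal (C * \<epsilon> * (norm (((1/2::real)^n) *\<^sub>R z))\<^sup>2) = ennreal ((4^n * ((1/2)^n)\<^sup>2) * (C * \<epsilon> * (norm z)\<^sup>2))"
      proof -
        have "0 \<le> C * \<epsilon> * (norm (((1/2::real)^n) *\<^sub>R z))\<^sup>2" using C \<epsilon> by auto
        then have "ennreal (4^n) * ennreal (C * \<epsilon> * (norm (((1/2::real)^n) *\<^sub>R z))\<^sup>2) = ennreal (4^n * (C * \<epsilon> * (norm (((1/2::real)^n) *\<^sub>R z))\<^sup>2))"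
          by (intro ennreal_mult[symmetric]) auto
        then show ?thesis by (simp add: power_mult_distrib mult_ac)
      qed
      ultimately show ?thesis using 4 by (simp add: distrib_left)
    qed
    also have "\<dots> \<le> Qf a z + ennreal e"
    proof -
      have "C * (norm z)\<^sup>2 \<le> (C + 1) * ((norm z)\<^sup>2 + 1)" using C
        by (intro mult_mono) auto
      then have "C * \<epsilon> * (norm z)\<^sup>2 \<le> K * \<epsilon>" unfolding K_def using \<epsilon>
        by (simp add: mult_right_mono mult_ac)
      also have "\<dots> \<le> e" using \<epsilon>(3) K by (simp add: field_simps)
      finally show ?thesis by (intro add_left_mono ennreal_leI)
    qed
    finally show "Tf w z \<le> Qf a z + ennreal e" .
  qed
qed

definition refl_b :: "'a::euclidean_space \<Rightarrow> 'a \<Rightarrow> 'a" where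
  "refl_b i x = (\<Sum>j\<in>Basis. ((if j = i then -1 else 1) * (x \<bullet> j)) *\<^sub>R j)"

lemma refl_b_inner:
  assumes "i \<in> Basis" "k \<in> Basis"
  shows "refl_b i x \<bullet> k = (if k = i then - (x \<bullet> k) else x \<bullet> k)"
proof -
  have "refl_b i x \<bullet> k = (\<Sum>j\<in>Basis. ((if j = i then -1 else 1) * (x \<bullet> j)) * (j \<bullet> k))"
    unfolding refl_b_def by (simp add: inner_sum_left)
  also have "\<dots> = (\<Sum>j\<in>Basis. if j = k then ((if j = i then -1 else 1) * (x \<bullet> j)) else 0)"
    using assms(2) by (intro sum.cong) (auto simp: inner_Basis)
  also have "\<dots> = (if k = i then - (x \<bullet> k) else x \<bullet> k)" using assms(2) by simp
  finally show ?thesis .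
qed

lemma refl_b_norm:
  assumes "i \<in> Basis"
  shows "norm (refl_b i x) = norm x"
proof -
  have "(norm (refl_b i x))\<^sup>2 = (norm x)\<^sup>2"
    unfolding power2_norm_eq_inner
    by (subst (1 2) euclidean_inner) (auto simp: refl_b_inner assms intro!: sum.cong)
  then show ?thesis by (simp add: power2_eq_iff_nonneg)
qed

lemma refl_b_meas [measurable]: "refl_b i \<in> borel_measurable borel"
  unfolding refl_b_def by measurable

lemma lborel_refl_b:
  assumes "i \<in> Basis"
  shows "distr lborel borel (refl_b i) = (lborel :: 'a::euclidean_space measure)"
proof -
  have "(lborel :: 'a measure) = density (distr lborel borel (\<lambda>x. 0 + (\<Sum>j\<in>Basis. ((if j = i then -1 else 1) * (x \<bullet> j)) *\<^sub>R j)))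
     (\<lambda>_. (\<Prod>j\<in>Basis. \<bar>(if j = i then -1 else 1 :: real)\<bar>))"
    by (rule lborel_affine_euclidean) auto
  also have "(\<lambda>x. 0 + (\<Sum>j\<in>Basis. ((if j = i then -1 else 1) * (x \<bullet> j)) *\<^sub>R j)) = refl_b i"
    unfolding refl_b_def by auto
  also have "(\<lambda>_::'a. (\<Prod>j\<in>Basis. \<bar>(if j = i then -1 else 1 :: real)\<bar>)) = (\<lambda>_. 1)"
    by (auto intro!: prod.neutral)
  finally show ?thesis by (simp add: density_1)
qed

lemma integral_refl_b:
  fixes F :: "'a::euclidean_space \<Rightarrow> real"
  assumes "i \<in> Basis" "F \<in> borel_measurable borel"
  shows "(\<integral>z. F (refl_b i z) \<partial>lborel) = (\<integral>z. F z \<partial>lborel)"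
proof -
  have "(\<integral>z. F z \<partial>lborel) = (\<integral>z. F z \<partial>distr lborel borel (refl_b i))"
    using lborel_refl_b[OF assms(1)] by simp
  also have "\<dots> = (\<integral>z. F (refl_b i z) \<partial>lborel)"
    by (rule integral_distr) (use assms in auto)
  finally show ?thesis ..
qed

lemma abs_mult_le_sq: "\<bar>a * b\<bar> \<le> a\<^sup>2 + (b::real)\<^sup>2"
proof -
  have "2 * \<bar>a * b\<bar> \<le> a\<^sup>2 + b\<^sup>2"
    using sum_squares_bound[of "\<bar>a\<bar>" "\<bar>b\<bar>"] by (simp add: abs_mult power2_eq_square)
  moreover have "0 \<le> a\<^sup>2 + b\<^sup>2" by simp
  ultimately show ?thesis by linarith
qed

lemma kernel_quad:
  fixes h :: "real \<Rightarrow> real" and b :: "'a::euclidean_space"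
  assumes hm [measurable]: "h \<in> borel_measurable borel" and h0: "\<And>t. h t \<ge> 0"
    and fin: "\<And>i. i \<in> Basis \<Longrightarrow> (\<integral>\<^sup>+(z::'a). ennreal (h (norm z) * (z \<bullet> i)\<^sup>2) \<partial>lborel) < \<infinity>"
  shows "(\<integral>\<^sup>+(z::'a). ennreal (h (norm z) * (b \<bullet> z)\<^sup>2) \<partial>lborel) =
     (\<Sum>i\<in>Basis. ennreal ((b \<bullet> i)\<^sup>2) * (\<integral>\<^sup>+(z::'a). ennreal (h (norm z) * (z \<bullet> i)\<^sup>2) \<partial>lborel))"
proof -
  define f where "f i j z = h (norm z) * ((z \<bullet> i) * (z \<bullet> j))" for i j :: 'a and z :: 'a
  have fm [measurable]: "f i j \<in> borel_measurable borel" for i j unfolding f_def by measurable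
  have int_g: "integrable lborel (\<lambda>z::'a. h (norm z) * (z \<bullet> i)\<^sup>2)" if "i \<in> Basis" for i
    by (rule integrableI_nonneg) (use fin[OF that] h0 in auto)
  have int_f: "integrable lborel (f i j)" if "i \<in> Basis" "j \<in> Basis" for i j
  proof (rule Bochner_Integration.integrable_bound)
    show "integrable lborel (\<lambda>z::'a. h (norm z) * (z \<bullet> i)\<^sup>2 + h (norm z) * (z \<bullet> j)\<^sup>2)"
      using int_g[OF that(1)] int_g[OF that(2)] by auto
    show "f i j \<in> borel_measurable lborel" by simp
    show "AE z in lborel. norm (f i j z) \<le> norm (h (norm z) * (z \<bullet> i)\<^sup>2 + h (norm z) * (z \<bullet> j)\<^sup>2)"
    proof (intro AE_I2)
      fix z :: 'a
      have "norm (f i j z) = h (norm z) * \<bar>(z \<bullet> i) * (z \<bullet> j)\<bar>"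
        unfolding f_def using h0 by (simp add: abs_mult)
      also have "\<dots> \<le> h (norm z) * ((z \<bullet> i)\<^sup>2 + (z \<bullet> j)\<^sup>2)"
        by (intro mult_left_mono abs_mult_le_sq h0)
      also have "\<dots> \<le> norm (h (norm z) * (z \<bullet> i)\<^sup>2 + h (norm z) * (z \<bullet> j)\<^sup>2)"
        by (simp add: algebra_simps)
      finally show "norm (f i j z) \<le> norm (h (norm z) * (z \<bullet> i)\<^sup>2 + h (norm z) * (z \<bullet> j)\<^sup>2)" .
    qed
  qed
  have cross: "integral\<^sup>L lborel (f i j) = 0" if "i \<in> Basis" "j \<in> Basis" "i \<noteq> j" for i j
  proof -
    have "(\<integral>z. f i j (refl_b i z) \<partial>lborel) = (\<integral>z. f i j z \<partial>lborel)"
      by (rule integral_refl_b) (use that in auto)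
    moreover have "f i j (refl_b i z) = - f i j z" for z
      unfolding f_def using that by (simp add: refl_b_inner refl_b_norm)
    ultimately show ?thesis by simp
  qed
  have expand: "h (norm z) * (b \<bullet> z)\<^sup>2 = (\<Sum>i\<in>Basis. \<Sum>j\<in>Basis. ((b \<bullet> i) * (b \<bullet> j)) * f i j z)" for z
  proof -
    have "(b \<bullet> z)\<^sup>2 = (\<Sum>i\<in>Basis. (b \<bullet> i) * (z \<bullet> i)) * (\<Sum>j\<in>Basis. (b \<bullet> j) * (z \<bullet> j))"
      by (simp add: power2_eq_square euclidean_inner[of b z])
    also have "\<dots> = (\<Sum>i\<in>Basis. \<Sum>j\<in>Basis. ((b \<bullet> i) * (z \<bullet> i)) * ((b \<bullet> j) * (z \<bullet> j)))"
      by (rule sum_product)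
    finally show ?thesis unfolding f_def
      by (simp add: sum_distrib_left mult_ac)
  qed
  have int_all: "integrable lborel (\<lambda>z::'a. h (norm z) * (b \<bullet> z)\<^sup>2)"
    unfolding expand using int_f by (intro Bochner_Integration.integrable_sum Bochner_Integration.integrable_mult_right) auto
  have "(\<integral>z. h (norm z) * (b \<bullet> z)\<^sup>2 \<partial>lborel) = (\<Sum>i\<in>Basis. \<Sum>j\<in>Basis. ((b \<bullet> i) * (b \<bullet> j)) * integral\<^sup>L lborel (f i j))"
    unfolding expand using int_f by (subst Bochner_Integration.integral_sum, auto intro!: Bochner_Integration.integrable_sum sum.cong)
  also have "\<dots> = (\<Sum>i\<in>Basis. (b \<bullet> i)\<^sup>2 * integral\<^sup>L lborel (f i i))"
  proof (intro sum.cong refl)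
    fix i :: 'a assume i: "i \<in> Basis"
    have "(\<Sum>j\<in>Basis. ((b \<bullet> i) * (b \<bullet> j)) * integral\<^sup>L lborel (f i j)) =
          (\<Sum>j\<in>Basis. if j = i then (b \<bullet> i)\<^sup>2 * integral\<^sup>L lborel (f i i) else 0)"
      using cross i by (intro sum.cong) (auto simp: power2_eq_square)
    also have "\<dots> = (b \<bullet> i)\<^sup>2 * integral\<^sup>L lborel (f i i)" using i by simp
    finally show "(\<Sum>j\<in>Basis. ((b \<bullet> i) * (b \<bullet> j)) * integral\<^sup>L lborel (f i j)) = (b \<bullet> i)\<^sup>2 * integral\<^sup>L lborel (f i i)" .
  qed
  finally have L: "(\<integral>z. h (norm z) * (b \<bullet> z)\<^sup>2 \<partial>lborel) = (\<Sum>i\<in>Basis. (b \<bullet> i)\<^sup>2 * integral\<^sup>L lborel (f i i))" .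
  have fii: "f i i = (\<lambda>z. h (norm z) * (z \<bullet> i)\<^sup>2)" for i unfolding f_def by (auto simp: power2_eq_square)
  have mi: "(\<integral>\<^sup>+(z::'a). ennreal (h (norm z) * (z \<bullet> i)\<^sup>2) \<partial>lborel) = ennreal (integral\<^sup>L lborel (f i i))" if "i \<in> Basis" for i
    unfolding fii by (rule nn_integral_eq_integral[OF int_g[OF that]]) (use h0 in auto)
  have nn: "integral\<^sup>L lborel (f i i) \<ge> 0" for i unfolding fii by (rule integral_nonneg_AE) (use h0 in auto)
  have "(\<integral>\<^sup>+(z::'a). ennreal (h (norm z) * (b \<bullet> z)\<^sup>2) \<partial>lborel) = ennreal (\<integral>z. h (norm z) * (b \<bullet> z)\<^sup>2 \<partial>lborel)"
    by (rule nn_integral_eq_integral[OF int_all]) (use h0 in auto)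
  also have "\<dots> = (\<Sum>i\<in>Basis. ennreal ((b \<bullet> i)\<^sup>2 * integral\<^sup>L lborel (f i i)))"
    unfolding L using nn by (subst sum_ennreal) auto
  also have "\<dots> = (\<Sum>i\<in>Basis. ennreal ((b \<bullet> i)\<^sup>2) * (\<integral>\<^sup>+(z::'a). ennreal (h (norm z) * (z \<bullet> i)\<^sup>2) \<partial>lborel))"
    using nn mi by (intro sum.cong refl) (simp add: ennreal_mult)
  finally show ?thesis .
qed

definition Ek :: "(real \<Rightarrow> real) \<Rightarrow> ('a::euclidean_space \<Rightarrow> real) \<Rightarrow> ennreal" where
  "Ek h w = (\<integral>\<^sup>+x. (\<integral>\<^sup>+y. ennreal ((w y - w x)\<^sup>2 * h (norm (y - x))) \<partial>lborel) \<partial>lborel)"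

lemma Ek_shift:
  fixes w :: "'a::euclidean_space \<Rightarrow> real"
  assumes [measurable]: "h \<in> borel_measurable borel" "w \<in> borel_measurable borel" and h0: "\<And>t. h t \<ge> 0"
  shows "Ek h w = (\<integral>\<^sup>+z. ennreal (h (norm z)) * Tf w z \<partial>lborel)"
proof -
  have inner: "(\<integral>\<^sup>+y. ennreal ((w y - w x)\<^sup>2 * h (norm (y - x))) \<partial>lborel) =
          (\<integral>\<^sup>+z. ennreal ((w (x + z) - w x)\<^sup>2 * h (norm z)) \<partial>lborel)" for x :: 'a
    using nn_integral_translate[where f="\<lambda>y. ennreal ((w y - w x)\<^sup>2 * h (norm (y - x)))" and c=x]
    by (simp add: add.commute)
  have "Ek h w = (\<integral>\<^sup>+x. (\<integral>\<^sup>+z. ennreal ((w (x + z) - w x)\<^sup>2 * h (norm z)) \<partial>lborel) \<partial>lborel)"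
    unfolding Ek_def inner ..
  also have "\<dots> = (\<integral>\<^sup>+z. (\<integral>\<^sup>+x. ennreal ((w (x + z) - w x)\<^sup>2 * h (norm z)) \<partial>lborel) \<partial>lborel)"
    by (rule lborel_pair.Fubini'[symmetric]) measurable
  also have "\<dots> = (\<integral>\<^sup>+z. ennreal (h (norm z)) * Tf w z \<partial>lborel)"
    unfolding Tf_def
    by (intro nn_integral_cong, subst nn_integral_cmult[symmetric])
       (auto simp: ennreal_mult[symmetric] h0 mult_ac)
  finally show ?thesis .
qed

lemma norm_sq_sum: "(norm x)\<^sup>2 = (\<Sum>i\<in>Basis. (x \<bullet> i)\<^sup>2)" for x :: "'a::euclidean_space"
  unfolding power2_norm_eq_inner by (subst euclidean_inner) (simp add: power2_eq_square)

lemma nn_integral_norm_sq: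
  fixes a :: "'b::euclidean_space \<Rightarrow> 'a::euclidean_space"
  assumes [measurable]: "a \<in> borel_measurable borel"
  shows "(\<integral>\<^sup>+x. ennreal ((norm (a x))\<^sup>2) \<partial>lborel) = (\<Sum>i\<in>Basis. \<integral>\<^sup>+x. ennreal ((a x \<bullet> i)\<^sup>2) \<partial>lborel)"
  unfolding norm_sq_sum by (subst nn_integral_sum[symmetric]) auto

lemma Q_kernel:
  fixes h :: "real \<Rightarrow> real" and a :: "'a::euclidean_space \<Rightarrow> 'a"
  assumes hm [measurable]: "h \<in> borel_measurable borel" and h0: "\<And>t. h t \<ge> 0"
    and fin: "\<And>i. i \<in> Basis \<Longrightarrow> (\<integral>\<^sup>+(z::'a). ennreal (h (norm z) * (z \<bullet> i)\<^sup>2) \<partial>lborel) < \<infinity>"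
    and am [measurable]: "a \<in> borel_measurable borel"
  shows "(\<integral>\<^sup>+z. ennreal (h (norm z)) * Qf a z \<partial>lborel) =
     (\<Sum>i\<in>Basis. (\<integral>\<^sup>+(z::'a). ennreal (h (norm z) * (z \<bullet> i)\<^sup>2) \<partial>lborel) * (\<integral>\<^sup>+x. ennreal ((a x \<bullet> i)\<^sup>2) \<partial>lborel))"
proof -
  have "(\<integral>\<^sup>+z. ennreal (h (norm z)) * Qf a z \<partial>lborel) =
        (\<integral>\<^sup>+z. (\<integral>\<^sup>+x. ennreal (h (norm z) * (a x \<bullet> z)\<^sup>2) \<partial>lborel) \<partial>lborel)"
    unfolding Qf_def
    by (intro nn_integral_cong, subst nn_integral_cmult[symmetric]) (auto simp: ennreal_mult[symmetric] h0)
  also have "\<dots> = (\<integral>\<^sup>+x. (\<integral>\<^sup>+z. ennreal (h (norm z) * (a x \<bullet> z)\<^sup>2) \<partial>lborel) \<partial>lborel)"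
    by (rule lborel_pair.Fubini') measurable
  also have "\<dots> = (\<integral>\<^sup>+x. (\<Sum>i\<in>Basis. ennreal ((a x \<bullet> i)\<^sup>2) * (\<integral>\<^sup>+(z::'a). ennreal (h (norm z) * (z \<bullet> i)\<^sup>2) \<partial>lborel)) \<partial>lborel)"
    by (intro nn_integral_cong kernel_quad[OF hm h0 fin]) auto
  also have "\<dots> = (\<Sum>i\<in>Basis. (\<integral>\<^sup>+x. ennreal ((a x \<bullet> i)\<^sup>2) * (\<integral>\<^sup>+(z::'a). ennreal (h (norm z) * (z \<bullet> i)\<^sup>2) \<partial>lborel) \<partial>lborel))"
    by (rule nn_integral_sum) auto
  also have "\<dots> = (\<Sum>i\<in>Basis. (\<integral>\<^sup>+(z::'a). ennreal (h (norm z) * (z \<bullet> i)\<^sup>2) \<partial>lborel) * (\<integral>\<^sup>+x. ennreal ((a x \<bullet> i)\<^sup>2) \<partial>lborel))"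
    by (intro sum.cong refl, subst nn_integral_multc) (auto simp: mult.commute)
  finally show ?thesis .
qed

lemma Ek_bound:
  fixes h :: "real \<Rightarrow> real" and a :: "'a::euclidean_space \<Rightarrow> 'a"
  assumes hm [measurable]: "h \<in> borel_measurable borel" and h0: "\<And>t. h t \<ge> 0"
    and m1: "\<And>i. i \<in> Basis \<Longrightarrow> (\<integral>\<^sup>+(z::'a). ennreal (h (norm z) * (z \<bullet> i)\<^sup>2) \<partial>lborel) \<le> 1"
    and nice: "nice w a"
  shows "Ek h w \<le> (\<integral>\<^sup>+x. ennreal ((norm (a x))\<^sup>2) \<partial>lborel)"
proof -
  have [measurable]: "w \<in> borel_measurable borel" "a \<in> borel_measurable borel" using nice_meas[OF nice] by auto
  have fin: "(\<integral>\<^sup>+(z::'a). ennreal (h (norm z) * (z \<bullet> i)\<^sup>2) \<partial>lborel) < \<infinity>" if "i \<in> Basis" for i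
    using m1[OF that] by (simp add: le_less_trans)
  have "Ek h w = (\<integral>\<^sup>+z. ennreal (h (norm z)) * Tf w z \<partial>lborel)"
    by (rule Ek_shift) (auto simp: h0)
  also have "\<dots> \<le> (\<integral>\<^sup>+z. ennreal (h (norm z)) * Qf a z \<partial>lborel)"
    by (intro nn_integral_mono mult_left_mono nice_T_le_Q[OF nice]) auto
  also have "\<dots> = (\<Sum>i\<in>Basis. (\<integral>\<^sup>+(z::'a). ennreal (h (norm z) * (z \<bullet> i)\<^sup>2) \<partial>lborel) * (\<integral>\<^sup>+x. ennreal ((a x \<bullet> i)\<^sup>2) \<partial>lborel))"
    by (rule Q_kernel[OF hm h0 fin]) auto
  also have "\<dots> \<le> (\<Sum>i\<in>Basis. 1 * (\<integral>\<^sup>+x. ennreal ((a x \<bullet> i)\<^sup>2) \<partial>lborel))"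
    by (intro sum_mono mult_right_mono m1) auto
  also have "\<dots> = (\<integral>\<^sup>+x. ennreal ((norm (a x))\<^sup>2) \<partial>lborel)"
    by (simp add: nn_integral_norm_sq)
  finally show ?thesis .
qed

lemma ennreal_approx_tendsto:
  fixes X A :: "nat \<Rightarrow> ennreal"
  assumes A: "A \<longlonglongrightarrow> ennreal L" and L: "L \<ge> 0"
    and approx: "\<And>e. e > 0 \<Longrightarrow> eventually (\<lambda>k. X k \<le> A k + ennreal e \<and> A k \<le> X k + ennreal e) sequentially"
  shows "X \<longlonglongrightarrow> ennreal L"
proof -
  have ev1: "eventually (\<lambda>k. A k < ennreal (L + 1)) sequentially"
    using order_tendstoD(2)[OF A] L by (simp add: ennreal_lessI)
  have evfin: "eventually (\<lambda>k. A k < top \<and> X k < top) sequentially"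
    using eventually_conj[OF ev1 approx[OF zero_less_one]]
  proof (rule eventually_mono)
    fix k assume "A k < ennreal (L + 1) \<and> X k \<le> A k + ennreal 1 \<and> A k \<le> X k + ennreal 1"
    then show "A k < top \<and> X k < top"
      by (metis ennreal_add_less_top ennreal_less_top order_le_less_trans order_less_trans)
  qed
  define x where "x k = enn2real (X k)" for k
  define \<alpha> where "\<alpha> k = enn2real (A k)" for k
  have \<alpha>: "\<alpha> \<longlonglongrightarrow> L" unfolding \<alpha>_def by (rule tendsto_enn2real[OF A L])
  have "x \<longlonglongrightarrow> L"
  proof (rule tendstoI)
    fix e :: real assume e: "e > 0"
    have "eventually (\<lambda>k. dist (\<alpha> k) L < e/2) sequentially" using tendstoD[OF \<alpha>, of "e/2"] e by simp
    moreover have "eventually (\<lambda>k. X k \<le> A k + ennreal (e/4) \<and> A k \<le> X k + ennreal (e/4)) sequentially"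
      using approx e by simp
    ultimately show "eventually (\<lambda>k. dist (x k) L < e) sequentially"
      using evfin
    proof (eventually_elim)
      case (elim k)
      have XA: "X k = ennreal (x k)" "A k = ennreal (\<alpha> k)" "x k \<ge> 0" "\<alpha> k \<ge> 0"
        using elim(3) unfolding x_def \<alpha>_def by auto
      have "ennreal (x k) \<le> ennreal (\<alpha> k + e/4)" "ennreal (\<alpha> k) \<le> ennreal (x k + e/4)"
        using elim(2) XA e by (subst ennreal_plus; force)+
      then have "x k \<le> \<alpha> k + e/4" "\<alpha> k \<le> x k + e/4"
        using XA e by (subst (asm) ennreal_le_iff; force)+
      then show ?case using elim(1) by (auto simp: dist_real_def abs_if split: if_splits)
    qed
  qed
  then have "(\<lambda>k. ennreal (x k)) \<longlonglongrightarrow> ennreal L" by (rule tendsto_ennrealI)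
  moreover have "eventually (\<lambda>k. ennreal (x k) = X k) sequentially"
    using evfin by eventually_elim (auto simp: x_def)
  ultimately show ?thesis by (rule Lim_transform_eventually)
qed

lemma nice_comp_fin:
  fixes a :: "'a::euclidean_space \<Rightarrow> 'a"
  assumes "nice w a"
  shows "(\<integral>\<^sup>+x. ennreal ((a x \<bullet> i)\<^sup>2) \<partial>lborel) < \<infinity>"
proof -
  obtain R M where RM: "R \<ge> 0" "M \<ge> 0" "\<And>x. R < norm x \<Longrightarrow> w x = 0 \<and> a x = 0" "\<And>x. norm (a x) \<le> M"
    using nice_bound[OF assms] by blast
  have "(\<integral>\<^sup>+x. ennreal ((a x \<bullet> i)\<^sup>2) \<partial>lborel) \<le> (\<integral>\<^sup>+x. ennreal ((M * norm i)\<^sup>2) * indicator (cball (0::'a) R) x \<partial>lborel)"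
  proof (intro nn_integral_mono)
    fix x
    show "ennreal ((a x \<bullet> i)\<^sup>2) \<le> ennreal ((M * norm i)\<^sup>2) * indicator (cball 0 R) x"
    proof (cases "norm x \<le> R")
      case True
      have "\<bar>a x \<bullet> i\<bar> \<le> M * norm i"
        using Cauchy_Schwarz_ineq2[of "a x" i] RM(4)[of x] by (meson mult_right_mono norm_ge_zero order_trans)
      then have "(a x \<bullet> i)\<^sup>2 \<le> (M * norm i)\<^sup>2" by (metis abs_ge_zero power2_abs power_mono)
      then show ?thesis using True by (simp add: ennreal_leI)
    next
      case False then show ?thesis using RM(3)[of x] by simp
    qed
  qed
  also have "\<dots> = ennreal ((M * norm i)\<^sup>2) * emeasure lborel (cball (0::'a) R)"
    by (rule nn_integral_cmult_indicator) simp
  also have "\<dots> < \<infinity>" using emeasure_lborel_cball_finite[of "0::'a" R]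
    by (simp add: ennreal_mult_less_top)
  finally show ?thesis .
qed

lemma Ek_tendsto:
  fixes hk :: "nat \<Rightarrow> real \<Rightarrow> real" and a :: "'a::euclidean_space \<Rightarrow> 'a" and \<delta> :: "nat \<Rightarrow> real"
  assumes hm [measurable]: "\<And>k. hk k \<in> borel_measurable borel" and h0: "\<And>k t. hk k t \<ge> 0"
    and m1: "\<And>k i. i \<in> Basis \<Longrightarrow> (\<integral>\<^sup>+(z::'a). ennreal (hk k (norm z) * (z \<bullet> i)\<^sup>2) \<partial>lborel) \<le> 1"
    and mlim: "\<And>i. i \<in> Basis \<Longrightarrow> (\<lambda>k. \<integral>\<^sup>+(z::'a). ennreal (hk k (norm z) * (z \<bullet> i)\<^sup>2) \<partial>lborel) \<longlonglongrightarrow> 1"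
    and supp: "\<And>k t. t > \<delta> k \<Longrightarrow> hk k t = 0" and \<delta>: "\<delta> \<longlonglongrightarrow> 0"
    and nice: "nice w a"
  shows "(\<lambda>k. Ek (hk k) w) \<longlonglongrightarrow> (\<integral>\<^sup>+x. ennreal ((norm (a x))\<^sup>2) \<partial>lborel)"
proof -
  have [measurable]: "w \<in> borel_measurable borel" "a \<in> borel_measurable borel" using nice_meas[OF nice] by auto
  define m where "m k i = (\<integral>\<^sup>+(z::'a). ennreal (hk k (norm z) * (z \<bullet> i)\<^sup>2) \<partial>lborel)" for k i
  define c where "c i = (\<integral>\<^sup>+x. ennreal ((a x \<bullet> i)\<^sup>2) \<partial>lborel)" for i
  have cfin: "c i < \<infinity>" for i unfolding c_def by (rule nice_comp_fin[OF nice])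
  have mfin: "m k i < \<infinity>" if "i \<in> Basis" for k i using m1[OF that, of k] unfolding m_def
    by (simp add: le_less_trans)
  define G where "G = (\<integral>\<^sup>+x. ennreal ((norm (a x))\<^sup>2) \<partial>lborel)"
  have G: "G = (\<Sum>i\<in>Basis. c i)" unfolding G_def c_def by (rule nn_integral_norm_sq) simp
  have Gfin: "G < \<infinity>" unfolding G using cfin by simp
  define A where "A k = (\<integral>\<^sup>+z. ennreal (hk k (norm z)) * Qf a z \<partial>lborel)" for k
  have Aeq: "A k = (\<Sum>i\<in>Basis. m k i * c i)" for k
    unfolding A_def m_def c_def by (rule Q_kernel) (use h0 mfin[unfolded m_def] in auto)
  have Alim: "A \<longlonglongrightarrow> G"
  proof -
    have "(\<lambda>k. \<Sum>i\<in>Basis. c i * m k i) \<longlonglongrightarrow> (\<Sum>i\<in>Basis. c i * 1)"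
      by (intro tendsto_sum ennreal_tendsto_cmult cfin) (use mlim cfin in \<open>auto simp: m_def\<close>)
    then show ?thesis unfolding Aeq G by (simp add: mult.commute)
  qed
  obtain C where C: "C \<ge> 0" "\<And>\<epsilon>. 0 < \<epsilon> \<Longrightarrow> \<epsilon> \<le> 1 \<Longrightarrow> \<exists>\<eta>>0. \<forall>z. norm z < \<eta> \<longrightarrow>
     Tf w z \<le> Qf a z + ennreal (C * \<epsilon> * (norm z)\<^sup>2) \<and> Qf a z \<le> Tf w z + ennreal (C * \<epsilon> * (norm z)\<^sup>2)"
    using nice_taylor[OF nice] by blast
  have Ek_eq: "Ek (hk k) w = (\<integral>\<^sup>+z. ennreal (hk k (norm z)) * Tf w z \<partial>lborel)" for k
    by (rule Ek_shift) (auto simp: h0)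
  have approx: "eventually (\<lambda>k. Ek (hk k) w \<le> A k + ennreal e \<and> A k \<le> Ek (hk k) w + ennreal e) sequentially"
    if e: "e > 0" for e
  proof -
    define K where "K = (C + 1) * (real DIM('a) + 1)"
    have K: "K > 0" unfolding K_def using C by (intro mult_pos_pos) (auto intro: add_nonneg_pos)
    define \<epsilon> where "\<epsilon> = min 1 (e / K)"
    have \<epsilon>: "0 < \<epsilon>" "\<epsilon> \<le> 1" "\<epsilon> \<le> e / K" unfolding \<epsilon>_def using e K by auto
    obtain \<eta> where \<eta>: "\<eta> > 0" "\<And>z. norm z < \<eta> \<Longrightarrow>
       Tf w z \<le> Qf a z + ennreal (C * \<epsilon> * (norm z)\<^sup>2) \<and> Qf a z \<le> Tf w z + ennreal (C * \<epsilon> * (norm z)\<^sup>2)"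
      using C(2)[OF \<epsilon>(1,2)] by blast
    have CeD: "C * \<epsilon> * real DIM('a) \<le> e"
    proof -
      have "C * real DIM('a) \<le> K" unfolding K_def using C by (intro mult_mono) auto
      then have "C * \<epsilon> * real DIM('a) \<le> K * \<epsilon>" using \<epsilon> by (simp add: mult_right_mono mult_ac)
      also have "\<dots> \<le> e" using \<epsilon>(3) K by (simp add: field_simps)
      finally show ?thesis .
    qed
    have ev: "eventually (\<lambda>k. \<delta> k < \<eta>) sequentially" using order_tendstoD(2)[OF \<delta> \<eta>(1)] .
    show ?thesis using ev
    proof eventually_elim
      case (elim k)
      have err: "(\<integral>\<^sup>+(z::'a). ennreal (hk k (norm z) * (C * \<epsilon> * (norm z)\<^sup>2)) \<partial>lborel) \<le> ennreal e"
      proof -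
        have "(\<integral>\<^sup>+(z::'a). ennreal (hk k (norm z) * (C * \<epsilon> * (norm z)\<^sup>2)) \<partial>lborel) =
              (\<integral>\<^sup>+(z::'a). ennreal (C * \<epsilon>) * (\<Sum>i\<in>Basis. ennreal (hk k (norm z) * (z \<bullet> i)\<^sup>2)) \<partial>lborel)"
        proof (intro nn_integral_cong)
          fix z :: 'a
          have "(\<Sum>i\<in>Basis. ennreal (hk k (norm z) * (z \<bullet> i)\<^sup>2)) = ennreal (\<Sum>i\<in>Basis. hk k (norm z) * (z \<bullet> i)\<^sup>2)"
            using h0 by (intro sum_ennreal) auto
          also have "(\<Sum>i\<in>Basis. hk k (norm z) * (z \<bullet> i)\<^sup>2) = hk k (norm z) * (norm z)\<^sup>2"
            by (simp add: norm_sq_sum sum_distrib_left)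
          finally have "ennreal (C * \<epsilon>) * (\<Sum>i\<in>Basis. ennreal (hk k (norm z) * (z \<bullet> i)\<^sup>2)) = ennreal (C * \<epsilon> * (hk k (norm z) * (norm z)\<^sup>2))"
            using C \<epsilon> h0 by (simp add: ennreal_mult)
          then show "ennreal (hk k (norm z) * (C * \<epsilon> * (norm z)\<^sup>2)) = ennreal (C * \<epsilon>) * (\<Sum>i\<in>Basis. ennreal (hk k (norm z) * (z \<bullet> i)\<^sup>2))"
            by (simp add: mult_ac)
        qed
        also have "\<dots> = ennreal (C * \<epsilon>) * (\<Sum>i\<in>Basis. m k i)"
          unfolding m_def by (subst nn_integral_cmult, measurable, subst nn_integral_sum) auto
        also have "\<dots> \<le> ennreal (C * \<epsilon>) * (\<Sum>i\<in>(Basis::'a set). 1)"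
          by (intro mult_left_mono sum_mono) (auto simp: m_def m1)
        also have "\<dots> = ennreal (C * \<epsilon> * real DIM('a))"
          using C \<epsilon> by (simp add: ennreal_mult ennreal_of_nat_eq_real_of_nat)
        also have "\<dots> \<le> ennreal e" using CeD by (rule ennreal_leI)
        finally show ?thesis .
      qed
      have pw1: "ennreal (hk k (norm z)) * Tf w z \<le> ennreal (hk k (norm z)) * Qf a z + ennreal (hk k (norm z) * (C * \<epsilon> * (norm z)\<^sup>2))"
       and pw2: "ennreal (hk k (norm z)) * Qf a z \<le> ennreal (hk k (norm z)) * Tf w z + ennreal (hk k (norm z) * (C * \<epsilon> * (norm z)\<^sup>2))"
        for z
      proof -
        have "(ennreal (hk k (norm z)) * Tf w z \<le> ennreal (hk k (norm z)) * Qf a z + ennreal (hk k (norm z) * (C * \<epsilon> * (norm z)\<^sup>2))) \<and>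
              (ennreal (hk k (norm z)) * Qf a z \<le> ennreal (hk k (norm z)) * Tf w z + ennreal (hk k (norm z) * (C * \<epsilon> * (norm z)\<^sup>2)))"
        proof (cases "norm z < \<eta>")
          case True
          have e2: "ennreal (hk k (norm z) * (C * \<epsilon> * (norm z)\<^sup>2)) = ennreal (hk k (norm z)) * ennreal (C * \<epsilon> * (norm z)\<^sup>2)"
            using h0 C \<epsilon> by (intro ennreal_mult) auto
          show ?thesis unfolding e2 distrib_left[symmetric]
            using \<eta>(2)[OF True] by (auto intro: mult_left_mono)
        next
          case False
          then have "hk k (norm z) = 0" using supp[of k "norm z"] elim by auto
          then show ?thesis by simp
        qed
        then show "ennreal (hk k (norm z)) * Tf w z \<le> ennreal (hk k (norm z)) * Qf a z + ennreal (hk k (norm z) * (C * \<epsilon> * (norm z)\<^sup>2))"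
          and "ennreal (hk k (norm z)) * Qf a z \<le> ennreal (hk k (norm z)) * Tf w z + ennreal (hk k (norm z) * (C * \<epsilon> * (norm z)\<^sup>2))"
          by auto
      qed
      have TfM [measurable]: "Tf w \<in> borel_measurable borel"
        unfolding Tf_def[abs_def] by (rule lborel.borel_measurable_nn_integral) measurable
      have QfM [measurable]: "Qf a \<in> borel_measurable borel"
        unfolding Qf_def[abs_def] by (rule lborel.borel_measurable_nn_integral) measurable
      have "Ek (hk k) w \<le> (\<integral>\<^sup>+z. ennreal (hk k (norm z)) * Qf a z + ennreal (hk k (norm z) * (C * \<epsilon> * (norm z)\<^sup>2)) \<partial>lborel)"
        unfolding Ek_eq by (intro nn_integral_mono pw1)
      also have "\<dots> = A k + (\<integral>\<^sup>+(z::'a). ennreal (hk k (norm z) * (C * \<epsilon> * (norm z)\<^sup>2)) \<partial>lborel)"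
        unfolding A_def by (rule nn_integral_add) measurable
      also have "\<dots> \<le> A k + ennreal e" using err by (rule add_left_mono)
      finally have 1: "Ek (hk k) w \<le> A k + ennreal e" .
      have "A k \<le> (\<integral>\<^sup>+z. ennreal (hk k (norm z)) * Tf w z + ennreal (hk k (norm z) * (C * \<epsilon> * (norm z)\<^sup>2)) \<partial>lborel)"
        unfolding A_def by (intro nn_integral_mono pw2)
      also have "\<dots> = Ek (hk k) w + (\<integral>\<^sup>+(z::'a). ennreal (hk k (norm z) * (C * \<epsilon> * (norm z)\<^sup>2)) \<partial>lborel)"
        unfolding Ek_eq by (rule nn_integral_add) measurable
      also have "\<dots> \<le> Ek (hk k) w + ennreal e" using err by (rule add_left_mono)
      finally show ?case using 1 by simp
    qed
  qed
  have "G = ennreal (enn2real G)" using Gfin by simp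
  then have "A \<longlonglongrightarrow> ennreal (enn2real G)" using Alim by simp
  from ennreal_approx_tendsto[OF this _ approx]
  have "(\<lambda>k. Ek (hk k) w) \<longlonglongrightarrow> ennreal (enn2real G)" by simp
  then show ?thesis using \<open>G = ennreal (enn2real G)\<close> unfolding G_def by simp
qed



lemma grad_zero_outside:
  fixes \<phi> :: "'a::euclidean_space \<Rightarrow> real"
  assumes "x \<notin> closure {x. \<phi> x \<noteq> 0}"
  shows "grad \<phi> x = 0"
proof -
  let ?S = "- closure {x. \<phi> x \<noteq> 0}"
  have "((\<lambda>_. 0) has_derivative (\<lambda>_. 0)) (at x)" by simp
  then have "(\<phi> has_derivative (\<lambda>_. 0)) (at x)"
    by (rule has_derivative_transform_within_open[of _ _ x UNIV ?S]) (use assms closure_subset[of "{x. \<phi> x \<noteq> 0}"] in auto)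
  then have "frechet_derivative \<phi> (at x) = (\<lambda>_. 0)" by (simp add: frechet_derivative_at[symmetric])
  then show ?thesis unfolding grad_def by simp
qed

lemma deriv_grad:
  fixes \<phi> :: "'a::euclidean_space \<Rightarrow> real"
  assumes "\<phi> differentiable (at x)"
  shows "(\<phi> has_derivative (\<lambda>h. grad \<phi> x \<bullet> h)) (at x)"
proof -
  let ?L = "frechet_derivative \<phi> (at x)"
  have d: "(\<phi> has_derivative ?L) (at x)" using assms frechet_derivative_works by blast
  then have lin: "linear ?L" using has_derivative_linear by blast
  have "?L h = grad \<phi> x \<bullet> h" for h
  proof -
    have "?L h = ?L h \<bullet> 1" by simp
    also have "\<dots> = (\<Sum>i\<in>Basis. (h \<bullet> i) * (?L i \<bullet> 1))" by (rule Linear_Algebra.linear_componentwise[OF lin])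
    also have "\<dots> = grad \<phi> x \<bullet> h" unfolding grad_def by (simp add: inner_sum_right mult.commute inner_commute)
    finally show ?thesis .
  qed
  then have "?L = (\<lambda>h. grad \<phi> x \<bullet> h)" by auto
  then show ?thesis using d by simp
qed

lemma test_fun_nice:
  fixes \<phi> :: "'a::euclidean_space \<Rightarrow> real"
  assumes "test_fun \<Omega> \<phi>"
  shows "nice \<phi> (grad \<phi>)"
proof -
  have ci: "C_inf \<phi>" and cpt: "compact (closure {x. \<phi> x \<noteq> 0})" using assms unfolding test_fun_def by auto
  have c: "\<And>is x. set is \<subseteq> Basis \<Longrightarrow> foldr partial_dir is \<phi> differentiable (at x)"
    using ci unfolding C_inf_def by blast
  have diff: "\<phi> differentiable (at x)" for x using c[of "[]" x] by simp
  have pdiff: "partial_dir i \<phi> differentiable (at x)" if "i \<in> Basis" for i x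
    using c[of "[i]" x] that by simp
  have "continuous_on UNIV (partial_dir i \<phi>)" if "i \<in> Basis" for i
    by (intro differentiable_imp_continuous_on differentiable_at_imp_differentiable_on pdiff that)
  then have "continuous_on UNIV (\<lambda>x. \<Sum>i\<in>Basis. partial_dir i \<phi> x *\<^sub>R i)"
    by (intro continuous_on_sum continuous_on_scaleR continuous_on_const) auto
  then have cont: "continuous_on UNIV (grad \<phi>)"
    unfolding grad_def[abs_def] partial_dir_def by simp
  obtain R where R: "\<And>x. x \<in> closure {x. \<phi> x \<noteq> 0} \<Longrightarrow> norm x \<le> R"
    using compact_imp_bounded[OF cpt] unfolding bounded_iff by blast
  have "R < norm x \<Longrightarrow> \<phi> x = 0 \<and> grad \<phi> x = 0" for x
  proof -
    assume "R < norm x"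
    then have "x \<notin> closure {x. \<phi> x \<noteq> 0}" using R by force
    moreover have "{x. \<phi> x \<noteq> 0} \<subseteq> closure {x. \<phi> x \<noteq> 0}" by (rule closure_subset)
    ultimately show ?thesis using grad_zero_outside[of x \<phi>] by blast
  qed
  moreover have "\<forall>x. (\<phi> has_derivative (\<lambda>h. grad \<phi> x \<bullet> h)) (at x)" using deriv_grad[OF diff] by blast
  ultimately show ?thesis unfolding nice_def using cont by blast
qed

lemma nice_diff:
  assumes "nice w1 a1" "nice w2 a2"
  shows "nice (\<lambda>x. w1 x - w2 x) (\<lambda>x. a1 x - a2 x)"
proof -
  obtain R1 where R1: "\<And>x. R1 < norm x \<Longrightarrow> w1 x = 0 \<and> a1 x = 0" using assms(1) unfolding nice_def by blast
  obtain R2 where R2: "\<And>x. R2 < norm x \<Longrightarrow> w2 x = 0 \<and> a2 x = 0" using assms(2) unfolding nice_def by blast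
  have "((\<lambda>x. w1 x - w2 x) has_derivative (\<lambda>h. (a1 x - a2 x) \<bullet> h)) (at x)" for x
  proof -
    have "((\<lambda>x. w1 x - w2 x) has_derivative (\<lambda>h. a1 x \<bullet> h - a2 x \<bullet> h)) (at x)"
      using assms unfolding nice_def by (intro has_derivative_diff) auto
    then show ?thesis by (simp add: inner_diff_left)
  qed
  moreover have "continuous_on UNIV (\<lambda>x. a1 x - a2 x)"
    using assms unfolding nice_def by (intro continuous_on_diff) auto
  moreover have "max R1 R2 < norm x \<Longrightarrow> w1 x - w2 x = 0 \<and> a1 x - a2 x = 0" for x using R1 R2 by auto
  ultimately show ?thesis unfolding nice_def by blast
qed

lemma sq_split:
  fixes p q \<epsilon> :: real
  assumes "\<epsilon> > 0"
  shows "(p + q)\<^sup>2 \<le> (1 + \<epsilon>) * p\<^sup>2 + (1 + 1/\<epsilon>) * q\<^sup>2"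
proof -
  have "0 \<le> (\<epsilon> * p - q)\<^sup>2 / \<epsilon>" using assms by simp
  also have "(\<epsilon> * p - q)\<^sup>2 / \<epsilon> = \<epsilon> * p\<^sup>2 + (1/\<epsilon>) * q\<^sup>2 - 2 * p * q"
    using assms by (simp add: power2_eq_square field_simps)
  finally show ?thesis by (simp add: power2_eq_square algebra_simps)
qed

lemma Ek_split:
  fixes w1 w2 :: "'a::euclidean_space \<Rightarrow> real"
  assumes [measurable]: "h \<in> borel_measurable borel" "w1 \<in> borel_measurable borel" "w2 \<in> borel_measurable borel"
    and h0: "\<And>t. h t \<ge> 0" and \<epsilon>: "\<epsilon> > 0"
  shows "Ek h (\<lambda>x. w1 x + w2 x) \<le> ennreal (1 + \<epsilon>) * Ek h w1 + ennreal (1 + 1/\<epsilon>) * Ek h w2"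
proof -
  define F where "F w x y = ennreal ((w y - w x)\<^sup>2 * h (norm (y - x)))" for w :: "'a \<Rightarrow> real" and x y
  have Fm [measurable]: "(\<lambda>(x, y). F w x y) \<in> borel_measurable (lborel \<Otimes>\<^sub>M lborel)"
    if [measurable]: "w \<in> borel_measurable borel" for w
    unfolding F_def by measurable
  have Fm1 [measurable]: "(\<lambda>x. \<integral>\<^sup>+y. F w x y \<partial>lborel) \<in> borel_measurable lborel"
    if [measurable]: "w \<in> borel_measurable borel" for w
    by (rule lborel.borel_measurable_nn_integral) (use Fm[OF that] in simp)
  have Fm2 [measurable]: "F w x \<in> borel_measurable lborel" if [measurable]: "w \<in> borel_measurable borel" for w x
    unfolding F_def by measurable
  have pw: "F (\<lambda>x. w1 x + w2 x) x y \<le> ennreal (1 + \<epsilon>) * F w1 x y + ennreal (1 + 1/\<epsilon>) * F w2 x y" for x y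
  proof -
    have "(w1 y + w2 y - (w1 x + w2 x))\<^sup>2 = ((w1 y - w1 x) + (w2 y - w2 x))\<^sup>2" by (simp add: algebra_simps)
    also have "\<dots> \<le> (1 + \<epsilon>) * (w1 y - w1 x)\<^sup>2 + (1 + 1/\<epsilon>) * (w2 y - w2 x)\<^sup>2" by (rule sq_split[OF \<epsilon>])
    finally have "(w1 y + w2 y - (w1 x + w2 x))\<^sup>2 * h (norm (y - x)) \<le>
        ((1 + \<epsilon>) * (w1 y - w1 x)\<^sup>2 + (1 + 1/\<epsilon>) * (w2 y - w2 x)\<^sup>2) * h (norm (y - x))"
      using h0 by (rule mult_right_mono) 
    then have "F (\<lambda>x. w1 x + w2 x) x y \<le> ennreal (((1 + \<epsilon>) * (w1 y - w1 x)\<^sup>2 + (1 + 1/\<epsilon>) * (w2 y - w2 x)\<^sup>2) * h (norm (y - x)))"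
      unfolding F_def by (rule ennreal_leI)
    also have "\<dots> = ennreal (1 + \<epsilon>) * F w1 x y + ennreal (1 + 1/\<epsilon>) * F w2 x y"
      unfolding F_def using \<epsilon> h0
      by (simp add: distrib_right ennreal_plus ennreal_mult[symmetric] mult.assoc)
    finally show ?thesis .
  qed
  have "Ek h (\<lambda>x. w1 x + w2 x) = (\<integral>\<^sup>+x. \<integral>\<^sup>+y. F (\<lambda>x. w1 x + w2 x) x y \<partial>lborel \<partial>lborel)"
    unfolding Ek_def F_def ..
  also have "\<dots> \<le> (\<integral>\<^sup>+x. \<integral>\<^sup>+y. ennreal (1 + \<epsilon>) * F w1 x y + ennreal (1 + 1/\<epsilon>) * F w2 x y \<partial>lborel \<partial>lborel)"
    by (intro nn_integral_mono pw)
  also have "\<dots> = (\<integral>\<^sup>+x. ennreal (1 + \<epsilon>) * (\<integral>\<^sup>+y. F w1 x y \<partial>lborel) + ennreal (1 + 1/\<epsilon>) * (\<integral>\<^sup>+y. F w2 x y \<partial>lborel) \<partial>lborel)"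
    by (intro nn_integral_cong) (simp add: nn_integral_add nn_integral_cmult)
  also have "\<dots> = ennreal (1 + \<epsilon>) * Ek h w1 + ennreal (1 + 1/\<epsilon>) * Ek h w2"
    unfolding Ek_def F_def[symmetric] by (simp add: nn_integral_add nn_integral_cmult)
  finally show ?thesis .
qed

lemma grad_split:
  fixes a b :: "'a::euclidean_space \<Rightarrow> 'a"
  assumes [measurable]: "a \<in> borel_measurable borel" "b \<in> borel_measurable borel" and \<epsilon>: "\<epsilon> > 0"
  shows "(\<integral>\<^sup>+x. ennreal ((norm (a x + b x))\<^sup>2) \<partial>lborel) \<le>
    ennreal (1 + \<epsilon>) * (\<integral>\<^sup>+x. ennreal ((norm (a x))\<^sup>2) \<partial>lborel) + ennreal (1 + 1/\<epsilon>) * (\<integral>\<^sup>+x. ennreal ((norm (b x))\<^sup>2) \<partial>lborel)"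
proof -
  have pw: "ennreal ((norm (a x + b x))\<^sup>2) \<le> ennreal (1 + \<epsilon>) * ennreal ((norm (a x))\<^sup>2) + ennreal (1 + 1/\<epsilon>) * ennreal ((norm (b x))\<^sup>2)" for x
  proof -
    have "(norm (a x + b x))\<^sup>2 \<le> (norm (a x) + norm (b x))\<^sup>2"
      by (simp add: norm_triangle_ineq power_mono)
    also have "\<dots> \<le> (1 + \<epsilon>) * (norm (a x))\<^sup>2 + (1 + 1/\<epsilon>) * (norm (b x))\<^sup>2" by (rule sq_split[OF \<epsilon>])
    finally have "ennreal ((norm (a x + b x))\<^sup>2) \<le> ennreal ((1 + \<epsilon>) * (norm (a x))\<^sup>2 + (1 + 1/\<epsilon>) * (norm (b x))\<^sup>2)"
      by (rule ennreal_leI)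
    also have "\<dots> = ennreal (1 + \<epsilon>) * ennreal ((norm (a x))\<^sup>2) + ennreal (1 + 1/\<epsilon>) * ennreal ((norm (b x))\<^sup>2)"
      using \<epsilon> by (simp add: ennreal_plus ennreal_mult)
    finally show ?thesis .
  qed
  have "(\<integral>\<^sup>+x. ennreal ((norm (a x + b x))\<^sup>2) \<partial>lborel) \<le>
     (\<integral>\<^sup>+x. ennreal (1 + \<epsilon>) * ennreal ((norm (a x))\<^sup>2) + ennreal (1 + 1/\<epsilon>) * ennreal ((norm (b x))\<^sup>2) \<partial>lborel)"
    by (intro nn_integral_mono pw)
  also have "\<dots> = ennreal (1 + \<epsilon>) * (\<integral>\<^sup>+x. ennreal ((norm (a x))\<^sup>2) \<partial>lborel) + ennreal (1 + 1/\<epsilon>) * (\<integral>\<^sup>+x. ennreal ((norm (b x))\<^sup>2) \<partial>lborel)"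
    by (simp add: nn_integral_add nn_integral_cmult)
  finally show ?thesis .
qed

lemma real_le_eps_mult:
  fixes x y :: real
  assumes "y \<ge> 0" "\<And>\<epsilon>. \<epsilon> > 0 \<Longrightarrow> x \<le> (1 + \<epsilon>) * y"
  shows "x \<le> y"
proof (rule field_le_epsilon)
  fix e :: real assume e: "e > 0"
  have "x \<le> (1 + e / (y + 1)) * y" using assms(2)[of "e / (y+1)"] e assms(1) by simp
  also have "\<dots> = y + e * (y / (y + 1))" using assms(1) by (simp add: field_simps)
  also have "\<dots> \<le> y + e * 1" using e assms(1) by (intro add_left_mono mult_left_mono) auto
  finally show "x \<le> y + e" by simp
qed

lemma sqrt_tri_real:
  fixes x y z :: real
  assumes "x \<ge> 0" "y \<ge> 0" "z \<ge> 0" "\<And>\<epsilon>. \<epsilon> > 0 \<Longrightarrow> x \<le> (1 + \<epsilon>) * y + (1 + 1/\<epsilon>) * z"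
  shows "sqrt x \<le> sqrt y + sqrt z"
proof -
  have "x \<le> (sqrt y + sqrt z)\<^sup>2"
  proof (cases "y = 0 \<or> z = 0")
    case True
    then show ?thesis
    proof
      assume y: "y = 0"
      have "x \<le> (1 + \<epsilon>) * z" if "\<epsilon> > 0" for \<epsilon>
        using assms(4)[of "1/\<epsilon>"] that y by (simp add: algebra_simps)
      then have "x \<le> z" by (rule real_le_eps_mult[OF assms(3)])
      then show ?thesis using y assms by simp
    next
      assume z: "z = 0"
      have "x \<le> (1 + \<epsilon>) * y" if "\<epsilon> > 0" for \<epsilon> using assms(4)[OF that] z by simp
      then have "x \<le> y" by (rule real_le_eps_mult[OF assms(2)])
      then show ?thesis using z assms by simp
    qed
  next
    case False
    then have yz: "y > 0" "z > 0" using assms by auto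
    define \<epsilon> where "\<epsilon> = sqrt z / sqrt y"
    have \<epsilon>: "\<epsilon> > 0" unfolding \<epsilon>_def using yz by simp
    have "x \<le> (1 + \<epsilon>) * y + (1 + 1/\<epsilon>) * z" by (rule assms(4)[OF \<epsilon>])
    also have "\<dots> = (sqrt y + sqrt z)\<^sup>2"
    proof -
      have sy: "sqrt y * sqrt y = y" "sqrt z * sqrt z = z" using yz by auto
      have "(1 + \<epsilon>) * y + (1 + 1/\<epsilon>) * z = y + sqrt z * sqrt y + z + sqrt y * sqrt z"
        unfolding \<epsilon>_def using yz sy by (simp add: field_simps)
      then show ?thesis using sy by (simp add: power2_eq_square algebra_simps)
    qed
    finally show ?thesis .
  qed
  then have "sqrt x \<le> sqrt ((sqrt y + sqrt z)\<^sup>2)" by (rule real_sqrt_le_mono)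
  then show ?thesis using assms by simp
qed

lemma sqrt_tri_enn:
  fixes X Y Z :: ennreal
  assumes "Y < \<infinity>" "Z < \<infinity>" "\<And>\<epsilon>. \<epsilon> > 0 \<Longrightarrow> X \<le> ennreal (1 + \<epsilon>) * Y + ennreal (1 + 1/\<epsilon>) * Z"
  shows "X < \<infinity>" "sqrt (enn2real X) \<le> sqrt (enn2real Y) + sqrt (enn2real Z)"
proof -
  have "X \<le> ennreal (1 + 1) * Y + ennreal (1 + 1/1) * Z" using assms(3)[of 1] by simp
  also have "\<dots> < \<infinity>" using assms(1,2) by (simp add: ennreal_mult_less_top)
  finally show Xf: "X < \<infinity>" .
  show "sqrt (enn2real X) \<le> sqrt (enn2real Y) + sqrt (enn2real Z)"
  proof (rule sqrt_tri_real)
    fix \<epsilon> :: real assume \<epsilon>: "\<epsilon> > 0"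
    have "X \<le> ennreal (1 + \<epsilon>) * Y + ennreal (1 + 1/\<epsilon>) * Z" using assms(3)[OF \<epsilon>] .
    also have "\<dots> = ennreal ((1 + \<epsilon>) * enn2real Y + (1 + 1/\<epsilon>) * enn2real Z)"
      using assms(1,2) \<epsilon> by (simp add: ennreal_mult ennreal_plus ennreal_enn2real_if less_top[symmetric])
    finally show "enn2real X \<le> (1 + \<epsilon>) * enn2real Y + (1 + 1/\<epsilon>) * enn2real Z"
      using Xf \<epsilon> by (metis enn2real_ennreal enn2real_mono ennreal_less_top add_nonneg_nonneg
          enn2real_nonneg mult_nonneg_nonneg less_eq_real_def zero_less_divide_1_iff add_pos_pos zero_less_one)
  qed auto
qed

lemma Ek_fatou:
  fixes v :: "'a::euclidean_space \<Rightarrow> real" and vs :: "nat \<Rightarrow> 'a \<Rightarrow> real"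
  assumes [measurable]: "h \<in> borel_measurable borel" "v \<in> borel_measurable borel" "\<And>m. vs m \<in> borel_measurable borel"
    and h0: "\<And>t. h t \<ge> 0"
    and ae: "AE x in lborel. (\<lambda>m. vs m x) \<longlonglongrightarrow> v x"
  shows "Ek h v \<le> liminf (\<lambda>m. Ek h (vs m))"
proof -
  define F where "F w x y = ennreal ((w y - w x)\<^sup>2 * h (norm (y - x)))" for w :: "'a \<Rightarrow> real" and x y
  have Fm [measurable]: "(\<lambda>(x, y). F w x y) \<in> borel_measurable (lborel \<Otimes>\<^sub>M lborel)"
    if [measurable]: "w \<in> borel_measurable borel" for w
    unfolding F_def by measurable
  have Fm1 [measurable]: "(\<lambda>x. \<integral>\<^sup>+y. F w x y \<partial>lborel) \<in> borel_measurable lborel"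
    if [measurable]: "w \<in> borel_measurable borel" for w
    by (rule lborel.borel_measurable_nn_integral) (use Fm[OF that] in simp)
  have Fm2 [measurable]: "F w x \<in> borel_measurable lborel" if [measurable]: "w \<in> borel_measurable borel" for w x
    unfolding F_def by measurable
  have inner: "(\<integral>\<^sup>+y. F v x y \<partial>lborel) \<le> liminf (\<lambda>m. \<integral>\<^sup>+y. F (vs m) x y \<partial>lborel)"
    if x: "(\<lambda>m. vs m x) \<longlonglongrightarrow> v x" for x
  proof -
    have "AE y in lborel. F v x y = liminf (\<lambda>m. F (vs m) x y)"
      using ae
    proof eventually_elim
      case (elim y)
      have "(\<lambda>m. F (vs m) x y) \<longlonglongrightarrow> F v x y"
        unfolding F_def by (intro tendsto_ennrealI tendsto_intros elim x)
      then show ?case by (simp add: lim_imp_Liminf)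
    qed
    then have "(\<integral>\<^sup>+y. F v x y \<partial>lborel) = (\<integral>\<^sup>+y. liminf (\<lambda>m. F (vs m) x y) \<partial>lborel)"
      by (rule nn_integral_cong_AE)
    also have "\<dots> \<le> liminf (\<lambda>m. \<integral>\<^sup>+y. F (vs m) x y \<partial>lborel)"
      by (rule nn_integral_liminf) simp
    finally show ?thesis .
  qed
  have "Ek h v = (\<integral>\<^sup>+x. \<integral>\<^sup>+y. F v x y \<partial>lborel \<partial>lborel)" unfolding Ek_def F_def ..
  also have "\<dots> \<le> (\<integral>\<^sup>+x. liminf (\<lambda>m. \<integral>\<^sup>+y. F (vs m) x y \<partial>lborel) \<partial>lborel)"
    by (rule nn_integral_mono_AE) (use ae inner in \<open>auto elim!: eventually_mono\<close>)
  also have "\<dots> \<le> liminf (\<lambda>m. \<integral>\<^sup>+x. \<integral>\<^sup>+y. F (vs m) x y \<partial>lborel \<partial>lborel)"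
    by (rule nn_integral_liminf) simp
  also have "\<dots> = liminf (\<lambda>m. Ek h (vs m))" unfolding Ek_def F_def ..
  finally show ?thesis .
qed

lemma L2_AE_subseq:
  fixes f :: "nat \<Rightarrow> 'a \<Rightarrow> real"
  assumes [measurable]: "\<And>m. f m \<in> borel_measurable M" "u \<in> borel_measurable M"
    and lim: "(\<lambda>m. \<integral>\<^sup>+x. ennreal ((f m x - u x)\<^sup>2) \<partial>M) \<longlonglongrightarrow> 0"
  shows "\<exists>r. strict_mono r \<and> (AE x in M. (\<lambda>m. f (r m) x) \<longlonglongrightarrow> u x)"
proof -
  have "eventually (\<lambda>m. (\<integral>\<^sup>+x. ennreal ((f m x - u x)\<^sup>2) \<partial>M) < 1) sequentially"
    using order_tendstoD(2)[OF lim] by simp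
  then obtain N where N: "\<And>m. m \<ge> N \<Longrightarrow> (\<integral>\<^sup>+x. ennreal ((f m x - u x)\<^sup>2) \<partial>M) < 1"
    unfolding eventually_sequentially by blast
  define g where "g m x = (f (m + N) x - u x)\<^sup>2" for m x
  have gm [measurable]: "g m \<in> borel_measurable M" for m unfolding g_def by measurable
  have gint: "integrable M (g m)" for m
  proof (rule integrableI_nonneg)
    have "(\<integral>\<^sup>+x. ennreal (g m x) \<partial>M) < 1" unfolding g_def using N[of "m + N"] by simp
    also have "(1::ennreal) < \<infinity>" by simp
    finally show "(\<integral>\<^sup>+x. ennreal (g m x) \<partial>M) < \<infinity>" .
  qed (auto simp: g_def)
  have eq: "ennreal (\<integral>x. norm (g m x) \<partial>M) = (\<integral>\<^sup>+x. ennreal ((f (m + N) x - u x)\<^sup>2) \<partial>M)" for m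
  proof -
    have "(\<integral>x. norm (g m x) \<partial>M) = (\<integral>x. g m x \<partial>M)" unfolding g_def by simp
    moreover have "(\<integral>\<^sup>+x. ennreal (g m x) \<partial>M) = ennreal (\<integral>x. g m x \<partial>M)"
      by (rule nn_integral_eq_integral[OF gint]) (auto simp: g_def)
    ultimately show ?thesis unfolding g_def by simp
  qed
  have "(\<lambda>m. ennreal (\<integral>x. norm (g m x) \<partial>M)) \<longlonglongrightarrow> ennreal 0"
    unfolding eq using LIMSEQ_ignore_initial_segment[OF lim, of N] by simp
  then have "(\<lambda>m. \<integral>x. norm (g m x) \<partial>M) \<longlonglongrightarrow> 0"
    by (rule tendsto_ennrealD) auto
  then obtain r where r: "strict_mono r" "AE x in M. (\<lambda>m. g (r m) x) \<longlonglongrightarrow> 0"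
    using tendsto_L1_AE_subseq[of M g] gint by blast
  have "AE x in M. (\<lambda>m. f (r m + N) x) \<longlonglongrightarrow> u x"
    using r(2)
  proof eventually_elim
    case (elim x)
    then have "(\<lambda>m. sqrt (g (r m) x)) \<longlonglongrightarrow> sqrt 0" by (intro tendsto_real_sqrt)
    then have "(\<lambda>m. \<bar>f (r m + N) x - u x\<bar>) \<longlonglongrightarrow> 0" unfolding g_def by simp
    then have "(\<lambda>m. f (r m + N) x - u x) \<longlonglongrightarrow> 0" by (simp add: tendsto_rabs_zero_iff)
    then show ?case by (rule LIM_zero_cancel)
  qed
  moreover have "strict_mono (\<lambda>m. r m + N)" using r(1) by (simp add: strict_mono_def)
  ultimately show ?thesis by blast
qed

lemma three_eps:
  fixes s :: "nat \<Rightarrow> real" and t :: "nat \<Rightarrow> nat \<Rightarrow> real"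
  assumes c: "c \<longlonglongrightarrow> 0" and st: "\<And>n k. \<bar>s k - t n k\<bar> \<le> c n"
    and tT: "\<And>n. (\<lambda>k. t n k) \<longlonglongrightarrow> T n" and TS: "\<And>n. \<bar>T n - S\<bar> \<le> c n"
  shows "s \<longlonglongrightarrow> S"
proof (rule tendstoI)
  fix e :: real assume e: "e > 0"
  have "eventually (\<lambda>n. dist (c n) 0 < e/3) sequentially" using tendstoD[OF c, of "e/3"] e by simp
  then obtain n where n: "\<bar>c n\<bar> < e/3" unfolding eventually_sequentially by (metis dist_real_def diff_zero le_refl)
  have "eventually (\<lambda>k. dist (t n k) (T n) < e/3) sequentially" using tendstoD[OF tT[of n], of "e/3"] e by simp
  then show "eventually (\<lambda>k. dist (s k) S < e) sequentially"
  proof eventually_elim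
    case (elim k)
    have "\<bar>s k - S\<bar> \<le> \<bar>s k - t n k\<bar> + \<bar>t n k - T n\<bar> + \<bar>T n - S\<bar>" by linarith
    also have "\<dots> < e" using st[of k n] TS[of n] n elim by (simp add: dist_real_def)
    finally show ?case by (simp add: dist_real_def)
  qed
qed

lemma near_frontier:
  fixes \<Omega> :: "'a::euclidean_space set"
  assumes "open \<Omega>" "x \<in> \<Omega>" "y \<notin> \<Omega>" "norm (y - x) \<le> r"
  shows "infdist y (frontier \<Omega>) < r"
proof -
  have "closed_segment x y \<inter> frontier \<Omega> \<noteq> {}"
    by (rule connected_Int_frontier) (use assms in auto)
  then obtain p where p: "p \<in> closed_segment x y" "p \<in> frontier \<Omega>" by blast
  have "p \<noteq> x" using p(2) assms(1,2) by (auto simp: frontier_def interior_open)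
  obtain t where t: "0 \<le> t" "t \<le> 1" "p = (1 - t) *\<^sub>R x + t *\<^sub>R y" using p(1) unfolding in_segment by blast
  have "t \<noteq> 0" using t \<open>p \<noteq> x\<close> by auto
  have xy: "x \<noteq> y" using assms by auto
  have "y - p = (1 - t) *\<^sub>R (y - x)" unfolding t(3) by (simp add: algebra_simps)
  then have "dist y p = (1 - t) * norm (y - x)" using t by (simp add: dist_norm)
  also have "\<dots> < norm (y - x)" using t \<open>t \<noteq> 0\<close> xy by (simp add: mult_less_cancel_right2)
  finally have "dist y p < r" using assms(4) by simp
  moreover have "infdist y (frontier \<Omega>) \<le> dist y p" by (rule infdist_le[OF p(2)])
  ultimately show ?thesis by simp
qed

lemma g_zero_outside:
  fixes \<Omega> :: "'a::euclidean_space set"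
  assumes H: "H10 \<Omega> u g" and op: "open \<Omega>"
  shows "AE x in lborel. x \<notin> \<Omega> \<longrightarrow> g x = 0"
proof -
  obtain \<phi> where \<phi>: "\<And>n. test_fun \<Omega> (\<phi> n)"
    and G2: "(\<lambda>n. \<integral>\<^sup>+ x. ennreal ((norm (grad (\<phi> n) x - g x))\<^sup>2) \<partial>lborel) \<longlonglongrightarrow> 0"
    and gm: "g \<in> borel_measurable lborel"
    using H unfolding H10_def by blast
  have [measurable]: "g \<in> borel_measurable borel" using gm by simp
  have [measurable]: "\<Omega> \<in> sets borel" using op by simp
  have le: "(\<integral>\<^sup>+x. ennreal ((norm (g x))\<^sup>2) * indicator (- \<Omega>) x \<partial>lborel) \<le> (\<integral>\<^sup>+ x. ennreal ((norm (grad (\<phi> n) x - g x))\<^sup>2) \<partial>lborel)" for n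
  proof (intro nn_integral_mono)
    fix x
    show "ennreal ((norm (g x))\<^sup>2) * indicator (- \<Omega>) x \<le> ennreal ((norm (grad (\<phi> n) x - g x))\<^sup>2)"
    proof (cases "x \<in> \<Omega>")
      case False
      have "closure {x. \<phi> n x \<noteq> 0} \<subseteq> \<Omega>" using \<phi>[of n] unfolding test_fun_def by auto
      then have "grad (\<phi> n) x = 0" using False by (intro grad_zero_outside) auto
      then show ?thesis using False by simp
    qed simp
  qed
  have "(\<integral>\<^sup>+x. ennreal ((norm (g x))\<^sup>2) * indicator (- \<Omega>) x \<partial>lborel) \<le> 0"
    by (rule LIMSEQ_le_const[OF G2]) (use le in blast)
  then have "(\<integral>\<^sup>+x. ennreal ((norm (g x))\<^sup>2) * indicator (- \<Omega>) x \<partial>lborel) = 0" by simp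
  then have "AE x in lborel. ennreal ((norm (g x))\<^sup>2) * indicator (- \<Omega>) x = 0"
    by (subst (asm) nn_integral_0_iff_AE) (auto intro!: borel_measurable_indicator)
  then show ?thesis by (rule eventually_mono) (auto simp: indicator_def split: if_splits)
qed


theorem theoremA2:
  fixes \<Omega> :: "'a::euclidean_space set"
    and \<delta> :: "nat \<Rightarrow> real" and \<delta>0 :: real
    and gt :: "nat \<Rightarrow> real \<Rightarrow> real"
    and P :: "nat \<Rightarrow> 'a \<Rightarrow> 'a set"
    and rlow :: "nat \<Rightarrow> real"
    and u :: "'a \<Rightarrow> real" and g :: "'a \<Rightarrow> 'a"
    and D :: "'a set"
  assumes \<Omega>: "bounded \<Omega>" "open \<Omega>"
    and \<delta>_pos: "\<And>k. \<delta> k > 0"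
    and \<delta>_dec: "decseq \<delta>"
    and \<delta>_lim: "\<delta> \<longlonglongrightarrow> 0"
    and \<delta>_le: "\<And>k. \<delta> k \<le> \<delta>0"
    and D_def: "D = \<Omega> \<union> {y. y \<notin> \<Omega> \<and> infdist y (frontier \<Omega>) < \<delta>0}"
    and gt_meas: "\<And>k. gt k \<in> borel_measurable borel"
    and gt_nonneg: "\<And>k t. gt k t \<ge> 0"
    and gt_pos: "\<And>k t. 0 \<le> t \<Longrightarrow> t < \<delta> k \<Longrightarrow> gt k t > 0"
    and gt_zero: "\<And>k t. t > \<delta> k \<Longrightarrow> gt k t = 0"
    and gt_moment: "\<And>k i. i \<in> Basis \<Longrightarrow>
       (\<integral>\<^sup>+ (z::'a). ennreal ((z \<bullet> i)\<^sup>2 * gt k (norm z)) * indicator (cball 0 (\<delta> k)) z \<partial>lborel) = 1"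
    and P_poly: "\<And>k x. x \<in> \<Omega> \<Longrightarrow> polytope (P k x) \<and> P k x \<subseteq> cball x (\<delta> k)"
    and rlow_def: "\<And>k. rlow k = Inf ((\<lambda>x. inner_radius x (P k x)) ` \<Omega>)"
    and r_moment: "\<And>i. i \<in> Basis \<Longrightarrow>
       (\<lambda>k. \<integral>\<^sup>+ (z::'a). ennreal ((z \<bullet> i)\<^sup>2 * gt k (norm z)) * indicator (cball 0 (rlow k)) z \<partial>lborel)
         \<longlonglongrightarrow> 1"
    and u_H10: "H10 \<Omega> u g"
    and u_ext: "\<And>x. x \<notin> \<Omega> \<Longrightarrow> u x = 0"
  shows "(\<lambda>k. \<integral>\<^sup>+ x. (\<integral>\<^sup>+ y.
            ennreal ((u y - u x)\<^sup>2 * gt k (norm (y - x)) * indicator {0..rlow k} (norm (y - x)))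
              * indicator D y \<partial>lborel) * indicator D x \<partial>lborel)
         \<longlonglongrightarrow> (\<integral>\<^sup>+ x. ennreal ((norm (g x))\<^sup>2) * indicator D x \<partial>lborel)"
  proof -
  obtain \<phi> where \<phi>: "\<And>n. test_fun \<Omega> (\<phi> n)"
    and L2: "(\<lambda>n. \<integral>\<^sup>+ x. ennreal ((\<phi> n x - u x)\<^sup>2) \<partial>lborel) \<longlonglongrightarrow> 0"
    and G2: "(\<lambda>n. \<integral>\<^sup>+ x. ennreal ((norm (grad (\<phi> n) x - g x))\<^sup>2) \<partial>lborel) \<longlonglongrightarrow> 0"
    and um: "u \<in> borel_measurable lborel" and gm: "g \<in> borel_measurable lborel"
    using u_H10 unfolding H10_def by blast
  have um' [measurable]: "u \<in> borel_measurable borel" and gm' [measurable]: "g \<in> borel_measurable borel"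
    using um gm by simp_all
  have nice: "\<And>n. nice (\<phi> n) (grad (\<phi> n))" using test_fun_nice[OF \<phi>] .
  have \<phi>m [measurable]: "\<phi> n \<in> borel_measurable borel" "grad (\<phi> n) \<in> borel_measurable borel" for n
    using nice_meas[OF nice[of n]] by auto
  define hk where "hk k t = gt k t * indicator {0..rlow k} t" for k t
  have hm [measurable]: "hk k \<in> borel_measurable borel" for k
    unfolding hk_def[abs_def] using gt_meas[of k] by measurable
  have h0: "hk k t \<ge> 0" for k t unfolding hk_def using gt_nonneg[of k t] by (simp add: indicator_def)
  have supp: "hk k t = 0" if "t > \<delta> k" for k t unfolding hk_def using gt_zero[OF that] by simp
  have m1: "(\<integral>\<^sup>+(z::'a). ennreal (hk k (norm z) * (z \<bullet> i)\<^sup>2) \<partial>lborel) \<le> 1" if i: "i \<in> Basis" for k i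
  proof -
    have "(\<integral>\<^sup>+(z::'a). ennreal (hk k (norm z) * (z \<bullet> i)\<^sup>2) \<partial>lborel) \<le>
          (\<integral>\<^sup>+ (z::'a). ennreal ((z \<bullet> i)\<^sup>2 * gt k (norm z)) * indicator (cball 0 (\<delta> k)) z \<partial>lborel)"
    proof (intro nn_integral_mono)
      fix z :: 'a
      show "ennreal (hk k (norm z) * (z \<bullet> i)\<^sup>2) \<le> ennreal ((z \<bullet> i)\<^sup>2 * gt k (norm z)) * indicator (cball 0 (\<delta> k)) z"
      proof (cases "norm z \<le> \<delta> k")
        case True
        have "hk k (norm z) \<le> gt k (norm z)" unfolding hk_def using gt_nonneg[of k "norm z"] by (simp add: indicator_def)
        then have "hk k (norm z) * (z \<bullet> i)\<^sup>2 \<le> (z \<bullet> i)\<^sup>2 * gt k (norm z)"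
          by (subst mult.commute) (rule mult_left_mono, auto)
        then show ?thesis using True by (simp add: ennreal_leI)
      next
        case False then show ?thesis using supp[of k "norm z"] by simp
      qed
    qed
    also have "\<dots> = 1" by (rule gt_moment[OF i])
    finally show ?thesis .
  qed
  have mlim: "(\<lambda>k. \<integral>\<^sup>+(z::'a). ennreal (hk k (norm z) * (z \<bullet> i)\<^sup>2) \<partial>lborel) \<longlonglongrightarrow> 1" if i: "i \<in> Basis" for i
  proof -
    have "(\<integral>\<^sup>+(z::'a). ennreal (hk k (norm z) * (z \<bullet> i)\<^sup>2) \<partial>lborel) =
          (\<integral>\<^sup>+ (z::'a). ennreal ((z \<bullet> i)\<^sup>2 * gt k (norm z)) * indicator (cball 0 (rlow k)) z \<partial>lborel)" for k
      unfolding hk_def by (intro nn_integral_cong) (auto simp: indicator_def mult_ac)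
    then show ?thesis using r_moment[OF i] by simp
  qed
  define X where "X k = Ek (hk k) u" for k
  define Y where "Y n k = Ek (hk k) (\<phi> n)" for n k
  define Z where "Z n k = Ek (hk k) (\<lambda>x. u x - \<phi> n x)" for n k
  define Gd where "Gd = (\<integral>\<^sup>+x. ennreal ((norm (g x))\<^sup>2) \<partial>lborel)"
  define A where "A n = (\<integral>\<^sup>+x. ennreal ((norm (grad (\<phi> n) x))\<^sup>2) \<partial>lborel)" for n
  define e where "e n = (\<integral>\<^sup>+ x. ennreal ((norm (grad (\<phi> n) x - g x))\<^sup>2) \<partial>lborel)" for n
  have e0: "e \<longlonglongrightarrow> 0" unfolding e_def by (rule G2)
  have Afin: "A n < \<infinity>" for n
    unfolding A_def using nice_comp_fin[OF nice[of n]] by (simp add: nn_integral_norm_sq)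
  have GA: "Gd \<le> ennreal (1 + \<epsilon>) * A n + ennreal (1 + 1/\<epsilon>) * e n" if "\<epsilon> > 0" for n \<epsilon>
  proof -
    have "Gd = (\<integral>\<^sup>+x. ennreal ((norm (grad (\<phi> n) x + (g x - grad (\<phi> n) x)))\<^sup>2) \<partial>lborel)"
      unfolding Gd_def by simp
    also have "\<dots> \<le> ennreal (1 + \<epsilon>) * A n + ennreal (1 + 1/\<epsilon>) * (\<integral>\<^sup>+x. ennreal ((norm (g x - grad (\<phi> n) x))\<^sup>2) \<partial>lborel)"
      unfolding A_def by (rule grad_split[OF _ _ that]) auto
    also have "(\<integral>\<^sup>+x. ennreal ((norm (g x - grad (\<phi> n) x))\<^sup>2) \<partial>lborel) = e n"
      unfolding e_def by (simp add: norm_minus_commute)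
    finally show ?thesis .
  qed
  have AG: "A n \<le> ennreal (1 + \<epsilon>) * Gd + ennreal (1 + 1/\<epsilon>) * e n" if "\<epsilon> > 0" for n \<epsilon>
  proof -
    have "A n = (\<integral>\<^sup>+x. ennreal ((norm (g x + (grad (\<phi> n) x - g x)))\<^sup>2) \<partial>lborel)"
      unfolding A_def by simp
    also have "\<dots> \<le> ennreal (1 + \<epsilon>) * Gd + ennreal (1 + 1/\<epsilon>) * e n"
      unfolding Gd_def e_def by (rule grad_split[OF _ _ that]) auto
    finally show ?thesis .
  qed
  obtain n0 where n0: "e n0 < 1"
    using order_tendstoD(2)[OF e0, of 1] by (auto simp: eventually_sequentially)
  have Gfin: "Gd < \<infinity>"
  proof -
    have "Gd \<le> ennreal (1 + 1) * A n0 + ennreal (1 + 1/1) * e n0" using GA[of 1 n0] by simp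
    also have "\<dots> < \<infinity>" using Afin[of n0] n0 by (simp add: ennreal_mult_less_top order_less_trans[OF _ ennreal_less_top[of 1]])
    finally show ?thesis .
  qed
  have efin: "e n < \<infinity>" for n
  proof -
    have "e n \<le> (\<integral>\<^sup>+x. ennreal ((norm (grad (\<phi> n) x + (- g x)))\<^sup>2) \<partial>lborel)" unfolding e_def by simp
    also have "\<dots> \<le> ennreal (1 + 1) * A n + ennreal (1 + 1/1) * Gd"
      unfolding A_def Gd_def using grad_split[of "grad (\<phi> n)" "\<lambda>x. - g x" 1] by simp
    also have "\<dots> < \<infinity>" using Afin[of n] Gfin by (simp add: ennreal_mult_less_top)
    finally show ?thesis .
  qed
  obtain r where r: "strict_mono r" "AE x in lborel. (\<lambda>m. \<phi> (r m) x) \<longlonglongrightarrow> u x"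
    using L2_AE_subseq[of \<phi> lborel u] L2 by auto
  have Zb: "Z n k \<le> 2 * e n" for n k
  proof -
    have "Z n k \<le> liminf (\<lambda>m. Ek (hk k) (\<lambda>x. \<phi> (r m) x - \<phi> n x))"
      unfolding Z_def
      by (rule Ek_fatou[OF hm _ _ h0]) (use r(2) in \<open>auto elim!: eventually_mono intro: tendsto_diff\<close>)
    also have "\<dots> \<le> liminf (\<lambda>m. 2 * e (r m) + 2 * e n)"
    proof (intro Liminf_mono always_eventually allI)
      fix m
      have "Ek (hk k) (\<lambda>x. \<phi> (r m) x - \<phi> n x) \<le> (\<integral>\<^sup>+x. ennreal ((norm (grad (\<phi> (r m)) x - grad (\<phi> n) x))\<^sup>2) \<partial>lborel)"
        by (rule Ek_bound[OF hm h0 m1 nice_diff[OF nice nice]])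
      also have "\<dots> = (\<integral>\<^sup>+x. ennreal ((norm ((grad (\<phi> (r m)) x - g x) + (g x - grad (\<phi> n) x)))\<^sup>2) \<partial>lborel)"
        by simp
      also have "\<dots> \<le> ennreal (1 + 1) * e (r m) + ennreal (1 + 1/1) * (\<integral>\<^sup>+x. ennreal ((norm (g x - grad (\<phi> n) x))\<^sup>2) \<partial>lborel)"
        unfolding e_def by (rule grad_split) auto
      also have "(\<integral>\<^sup>+x. ennreal ((norm (g x - grad (\<phi> n) x))\<^sup>2) \<partial>lborel) = e n"
        unfolding e_def by (simp add: norm_minus_commute)
      finally show "Ek (hk k) (\<lambda>x. \<phi> (r m) x - \<phi> n x) \<le> 2 * e (r m) + 2 * e n" by simp
    qed
    also have "\<dots> = 2 * e n"
    proof (rule lim_imp_Liminf)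
      have "(\<lambda>m. e (r m)) \<longlonglongrightarrow> 0" using LIMSEQ_subseq_LIMSEQ[OF e0 r(1)] by (simp add: o_def)
      then have "(\<lambda>m. 2 * e (r m) + 2 * e n) \<longlonglongrightarrow> 2 * 0 + 2 * e n"
        by (intro tendsto_add tendsto_const ennreal_tendsto_cmult) auto
      then show "(\<lambda>m. 2 * e (r m) + 2 * e n) \<longlonglongrightarrow> 2 * e n" by simp
    qed simp
    finally show ?thesis .
  qed
  have Zfin: "Z n k < \<infinity>" for n k
    using Zb[of n k] efin[of n] by (simp add: ennreal_mult_less_top le_less_trans)
  have Yfin: "Y n k < \<infinity>" for n k
    unfolding Y_def using le_less_trans[OF Ek_bound[OF hm h0 m1 nice[of n]] Afin[of n, unfolded A_def]] .
  have XY: "X k \<le> ennreal (1 + \<epsilon>) * Y n k + ennreal (1 + 1/\<epsilon>) * Z n k" if "\<epsilon> > 0" for n k \<epsilon>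
  proof -
    have "Ek (hk k) (\<lambda>x. \<phi> n x + (u x - \<phi> n x)) \<le> ennreal (1 + \<epsilon>) * Ek (hk k) (\<phi> n) + ennreal (1 + 1/\<epsilon>) * Ek (hk k) (\<lambda>x. u x - \<phi> n x)"
      by (rule Ek_split) (use that h0 in auto)
    then show ?thesis by (simp add: X_def Y_def Z_def)
  qed
  have YX: "Y n k \<le> ennreal (1 + \<epsilon>) * X k + ennreal (1 + 1/\<epsilon>) * Z n k" if "\<epsilon> > 0" for n k \<epsilon>
  proof -
    have "Ek (hk k) (\<lambda>x. \<phi> n x - u x) = Z n k"
    proof -
      have "(\<phi> n y - u y - (\<phi> n x - u x))\<^sup>2 = (u y - \<phi> n y - (u x - \<phi> n x))\<^sup>2" for x y
        by (simp add: power2_eq_square algebra_simps)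
      then show ?thesis unfolding Z_def Ek_def by simp
    qed
    moreover have "Ek (hk k) (\<lambda>x. u x + (\<phi> n x - u x)) \<le> ennreal (1 + \<epsilon>) * Ek (hk k) u + ennreal (1 + 1/\<epsilon>) * Ek (hk k) (\<lambda>x. \<phi> n x - u x)"
      by (rule Ek_split) (use that h0 in auto)
    ultimately show ?thesis by (simp add: X_def Y_def)
  qed
  have Xfin: "X k < \<infinity>" for k using sqrt_tri_enn(1)[OF Yfin Zfin XY] by blast
  define c where "c n = sqrt (2 * enn2real (e n))" for n
  have sZ: "sqrt (enn2real (Z n k)) \<le> c n" for n k
  proof -
    have "enn2real (Z n k) \<le> enn2real (2 * e n)" using Zb[of n k] efin[of n]
      by (intro enn2real_mono) (auto simp: ennreal_mult_less_top)
    then show ?thesis unfolding c_def by (simp add: enn2real_mult)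
  qed
  have st: "\<bar>sqrt (enn2real (X k)) - sqrt (enn2real (Y n k))\<bar> \<le> c n" for n k
    using sqrt_tri_enn(2)[OF Yfin Zfin XY, of k n] sqrt_tri_enn(2)[OF Xfin Zfin YX, of n k] sZ[of n k]
    by (simp add: abs_le_iff)
  have tT: "(\<lambda>k. sqrt (enn2real (Y n k))) \<longlonglongrightarrow> sqrt (enn2real (A n))" for n
  proof -
    have "(\<lambda>k. Y n k) \<longlonglongrightarrow> A n" unfolding Y_def A_def
      by (rule Ek_tendsto[OF hm h0 m1 mlim supp \<delta>_lim nice])
    then have "(\<lambda>k. Y n k) \<longlonglongrightarrow> ennreal (enn2real (A n))" using Afin[of n] by simp
    then have "(\<lambda>k. enn2real (Y n k)) \<longlonglongrightarrow> enn2real (A n)" by (rule tendsto_enn2real) simp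
    then show ?thesis by (rule tendsto_real_sqrt)
  qed
  have eA: "sqrt (enn2real (e n)) \<le> c n" for n unfolding c_def by simp
  have TS: "\<bar>sqrt (enn2real (A n)) - sqrt (enn2real Gd)\<bar> \<le> c n" for n
    using sqrt_tri_enn(2)[OF Gfin efin AG, of n] sqrt_tri_enn(2)[OF Afin efin GA, of n] eA[of n]
    by (simp add: abs_le_iff)
  have c0: "c \<longlonglongrightarrow> 0"
  proof -
    have "(\<lambda>n. enn2real (e n)) \<longlonglongrightarrow> 0" using tendsto_enn2real[of e "0"] e0 by simp
    then have "c \<longlonglongrightarrow> sqrt (2 * 0)" unfolding c_def by (intro tendsto_real_sqrt tendsto_mult tendsto_const)
    then show ?thesis by simp
  qed
  have "(\<lambda>k. sqrt (enn2real (X k))) \<longlonglongrightarrow> sqrt (enn2real Gd)"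
    by (rule three_eps[OF c0 st tT TS])
  then have "(\<lambda>k. (sqrt (enn2real (X k)))\<^sup>2) \<longlonglongrightarrow> (sqrt (enn2real Gd))\<^sup>2" by (rule tendsto_power)
  then have "(\<lambda>k. enn2real (X k)) \<longlonglongrightarrow> enn2real Gd" by simp
  then have "(\<lambda>k. ennreal (enn2real (X k))) \<longlonglongrightarrow> ennreal (enn2real Gd)" by (rule tendsto_ennrealI)
  moreover have "(\<lambda>k. ennreal (enn2real (X k))) = X" using Xfin by (auto simp: fun_eq_iff less_top)
  moreover have "ennreal (enn2real Gd) = Gd" using Gfin by (simp add: less_top)
  ultimately have Xlim: "X \<longlonglongrightarrow> Gd" by simp
  have [measurable]: "\<Omega> \<in> sets borel" using \<Omega>(2) by simp
  have D\<Omega>: "\<Omega> \<subseteq> D" unfolding D_def by auto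
  have RHS: "(\<integral>\<^sup>+ x. ennreal ((norm (g x))\<^sup>2) * indicator D x \<partial>lborel) = Gd"
    unfolding Gd_def
  proof (rule nn_integral_cong_AE)
    show "AE x in lborel. ennreal ((norm (g x))\<^sup>2) * indicator D x = ennreal ((norm (g x))\<^sup>2)"
      using g_zero_outside[OF u_H10 \<Omega>(2)] by (rule eventually_mono) (use D\<Omega> in \<open>auto simp: indicator_def\<close>)
  qed
  have inD: "x \<in> D" if "y \<in> \<Omega>" "norm (y - x) \<le> \<delta>0" for x y
  proof (cases "x \<in> \<Omega>")
    case False
    have "infdist x (frontier \<Omega>) < \<delta>0" by (rule near_frontier[OF \<Omega>(2) that(1) False]) (use that(2) in \<open>simp add: norm_minus_commute\<close>)
    then show ?thesis unfolding D_def using False by auto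
  qed (use D\<Omega> in auto)
  have pw: "ennreal ((u y - u x)\<^sup>2 * gt k (norm (y - x)) * indicator {0..rlow k} (norm (y - x))) * indicator D y * indicator D x
      = ennreal ((u y - u x)\<^sup>2 * hk k (norm (y - x)))" for k x y
  proof (cases "x \<in> D \<and> y \<in> D")
    case True then show ?thesis unfolding hk_def by (simp add: mult.assoc)
  next
    case False
    have "(u y - u x)\<^sup>2 * hk k (norm (y - x)) = 0"
    proof (rule ccontr)
      assume "(u y - u x)\<^sup>2 * hk k (norm (y - x)) \<noteq> 0"
      then have uxy: "u y \<noteq> u x" and hne: "hk k (norm (y - x)) \<noteq> 0" by auto
      have "norm (y - x) \<le> \<delta> k" using supp[of k "norm (y - x)"] hne by force
      then have nd: "norm (y - x) \<le> \<delta>0" using \<delta>_le[of k] by simp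
      have "x \<in> \<Omega> \<or> y \<in> \<Omega>" using uxy u_ext by force
      then show False
      proof
        assume "x \<in> \<Omega>"
        then have "y \<in> D" using inD[of x y] nd by (simp add: norm_minus_commute)
        moreover have "x \<in> D" using \<open>x \<in> \<Omega>\<close> D\<Omega> by auto
        ultimately show False using False by simp
      next
        assume "y \<in> \<Omega>"
        then have "x \<in> D" using inD[of y x] nd by simp
        moreover have "y \<in> D" using \<open>y \<in> \<Omega>\<close> D\<Omega> by auto
        ultimately show False using False by simp
      qed
    qed
    then show ?thesis using False unfolding hk_def by (auto simp: mult.assoc)
  qed
  have LHS: "(\<integral>\<^sup>+ x. (\<integral>\<^sup>+ y.
            ennreal ((u y - u x)\<^sup>2 * gt k (norm (y - x)) * indicator {0..rlow k} (norm (y - x)))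
              * indicator D y \<partial>lborel) * indicator D x \<partial>lborel) = X k" for k
  proof -
    have "(\<integral>\<^sup>+ x. (\<integral>\<^sup>+ y.
            ennreal ((u y - u x)\<^sup>2 * gt k (norm (y - x)) * indicator {0..rlow k} (norm (y - x)))
              * indicator D y \<partial>lborel) * indicator D x \<partial>lborel) =
          (\<integral>\<^sup>+ x. (\<integral>\<^sup>+ y.
            ennreal ((u y - u x)\<^sup>2 * gt k (norm (y - x)) * indicator {0..rlow k} (norm (y - x)))
              * indicator D y * indicator D x \<partial>lborel) \<partial>lborel)"
      by (intro nn_integral_cong) (simp add: nn_integral_multc[symmetric] split: split_indicator)
    also have "\<dots> = X k" unfolding X_def Ek_def pw ..
    finally show ?thesis .
  qed
  show ?thesis unfolding LHS RHS using Xlim .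
qed



end
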